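(* Let $n\ge 1$ and let $X_1,\dots,X_n$ be operators in a complex Hilbert space $\mathcal{H}$, each of which is Hermitian or skew-Hermitian, all defined on a common invariant domain $D$ (i.e. $D\subset \mathrm{Dom}(X_j)$ and $X_jD\subset D$ for all $j$), and suppose that $[X_i,X_j]=c_{ij}I$ on $D$ for some constants $c_{ij}\in\mathbb{C}$, $i,j\in\{1,\dots,n\}$. Let $m^{(1)},\dots,m^{(n)}$ be sequences of positive numbers satisfying (A0), (A1), (A2), and such that the pair $(m^{(i)},m^{(j)})$ satisfies (A3) for every pair $(i,j)$ with $c_{ij}\neq 0$. Put $\mathbf{m}=(m^{(1)},\dots,m^{(n)})$, $\mathbf{X}=(X_1,\dots,X_n)$. Then a vector $u\in D$ belongs to $\mathcal{S}_{\mathbf{m}}(\mathbf{X})$ if and only if $u\in \mathcal{S}_{m^{(1)}}(X_1)\cap\dots\cap\mathcal{S}_{m^{(n)}}(X_n)$.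
   Context: Notation: $M(n)=\bigcup_{k\ge1}\{1,\dots,n\}^k$ is the set of multiindices; for $\alpha=(i_1,\dots,i_k)\in M(n)$, $|\alpha|=k$ and $|\alpha|_j=\mathrm{card}\{l: i_l=j\}$. For operators $\mathbf{X}=(X_1,\dots,X_n)$ in $\mathcal{H}$, $\mathbf{X}_\alpha=X_{i_1}\cdots X_{i_k}$ and $C^\infty(\mathbf{X})=\{u\in\mathcal{H}: u\in \mathrm{Dom}(\mathbf{X}_\alpha)\ \forall \alpha\in M(n)\}$. For sequences $m^{(j)}=(m^{(j)}_p)_{p\in\mathbb{N}}$ of positive reals and $\mathbf{m}=(m^{(1)},\dots,m^{(n)})$, set $\mathbf{m}_\alpha=m^{(1)}_{|\alpha|_1}\cdots m^{(n)}_{|\alpha|_n}$. The space of $\mathbf{m}$-Gelfand–Shilov–Roumieu vectors is $\mathcal{S}_{\mathbf{m}}(\mathbf{X})=\{u\in C^\infty(\mathbf{X}): \exists A,C>0,\ \|\mathbf{X}_\alpha u\|\le CA^{|\alpha|}\mathbf{m}_\alpha\ \forall\alpha\in M(n)\}$; in particular for a single operator $Y$ and a single sequence $m$, $\mathcal{S}_m(Y)=\{u\in C^\infty(Y):\exists A,C>0,\ \|Y^ku\|\le CA^km_k\ \forall k\ge1\}$. Conditions: (A0) $m^{(j)}_0=m^{(j)}_1=1$ for all $j$; (A1) $(m^{(j)}_p)^2\le m^{(j)}_{p-1}m^{(j)}_{p+1}$ for all $j$ and $p\ge1$; (A2) there is $H>0$ with $m^{(j)}_{p+q}\le H^{p+q}m^{(j)}_pm^{(j)}_q$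 for all $j$ and $p,q\in\mathbb{N}$. A pair of sequences $(m^{(j)},m^{(k)})$ satisfies (A3) if there is $L\ge1$ with $p\,m^{(j)}_{p-1}m^{(k)}_{p-1}\le L\,m^{(j)}_pm^{(k)}_p$ for all $p\ge1$. $[Y,Z]=YZ-ZY$. *)

theory Defs
  imports "HOL-Analysis.Analysis"
begin

definition hnorm :: "('h \<Rightarrow> 'h \<Rightarrow> complex) \<Rightarrow> 'h \<Rightarrow> real" where
  "hnorm ip u = sqrt (Re (ip u u))"

definition complex_hilbert_space ::
  "(complex \<Rightarrow> 'h::ab_group_add \<Rightarrow> 'h) \<Rightarrow> ('h \<Rightarrow> 'h \<Rightarrow> complex) \<Rightarrow> bool" where
  "complex_hilbert_space sc ip \<longleftrightarrow>
     Vector_Spaces.vector_space sc \<and>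
     (\<forall>x y z. ip (x + y) z = ip x z + ip y z) \<and>
     (\<forall>c x y. ip (sc c x) y = c * ip x y) \<and>
     (\<forall>x y. ip y x = cnj (ip x y)) \<and>
     (\<forall>x. 0 \<le> Re (ip x x)) \<and>
     (\<forall>x. ip x x = 0 \<longrightarrow> x = 0) \<and>
     (\<forall>f :: nat \<Rightarrow> 'h.
        (\<forall>e>0. \<exists>N. \<forall>p\<ge>N. \<forall>q\<ge>N. hnorm ip (f p - f q) < e) \<longrightarrow>
        (\<exists>l. \<forall>e>0. \<exists>N. \<forall>p\<ge>N. hnorm ip (f p - l) < e))"

definition is_operator ::
  "(complex \<Rightarrow> 'h::ab_group_add \<Rightarrow> 'h) \<Rightarrow> 'h set \<Rightarrow> ('h \<Rightarrow> 'h) \<Rightarrow> bool" where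
  "is_operator sc Dm X \<longleftrightarrow>
     0 \<in> Dm \<and> (\<forall>x\<in>Dm. \<forall>y\<in>Dm. x + y \<in> Dm) \<and> (\<forall>c. \<forall>x\<in>Dm. sc c x \<in> Dm) \<and>
     (\<forall>x\<in>Dm. \<forall>y\<in>Dm. X (x + y) = X x + X y) \<and> (\<forall>c. \<forall>x\<in>Dm. X (sc c x) = sc c (X x))"

definition hermitian_op :: "('h \<Rightarrow> 'h \<Rightarrow> complex) \<Rightarrow> 'h set \<Rightarrow> ('h \<Rightarrow> 'h) \<Rightarrow> bool" where
  "hermitian_op ip Dm X \<longleftrightarrow> (\<forall>u\<in>Dm. \<forall>v\<in>Dm. ip (X u) v = ip u (X v))"

definition skew_hermitian_op :: "('h \<Rightarrow> 'h \<Rightarrow> complex) \<Rightarrow> 'h set \<Rightarrow> ('h \<Rightarrow> 'h) \<Rightarrow> bool" where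
  "skew_hermitian_op ip Dm X \<longleftrightarrow> (\<forall>u\<in>Dm. \<forall>v\<in>Dm. ip (X u) v = - ip u (X v))"

text \<open>A multiindex \<open>(i_1,...,i_k)\<close> is the list \<open>[i_1,...,i_k]\<close>;
  \<open>X_alpha = X_{i_1} \<circ> ... \<circ> X_{i_k}\<close>, with its natural domain.\<close>

definition multiindices :: "nat \<Rightarrow> nat list set" where
  "multiindices n = {\<alpha>. \<alpha> \<noteq> [] \<and> set \<alpha> \<subseteq> {1..n}}"

fun mapply :: "(nat \<Rightarrow> 'h \<Rightarrow> 'h) \<Rightarrow> nat list \<Rightarrow> 'h \<Rightarrow> 'h" where
  "mapply X [] u = u"
| "mapply X (i # is) u = X i (mapply X is u)"

fun mdom :: "(nat \<Rightarrow> 'h set) \<Rightarrow> (nat \<Rightarrow> 'h \<Rightarrow> 'h) \<Rightarrow> nat list \<Rightarrow> 'h set" where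
  "mdom Dm X [] = UNIV"
| "mdom Dm X (i # is) = {u \<in> mdom Dm X is. mapply X is u \<in> Dm i}"

definition Cinf :: "nat \<Rightarrow> (nat \<Rightarrow> 'h set) \<Rightarrow> (nat \<Rightarrow> 'h \<Rightarrow> 'h) \<Rightarrow> 'h set" where
  "Cinf n Dm X = {u. \<forall>\<alpha>\<in>multiindices n. u \<in> mdom Dm X \<alpha>}"

definition mweight :: "(nat \<Rightarrow> nat \<Rightarrow> real) \<Rightarrow> nat \<Rightarrow> nat list \<Rightarrow> real" where
  "mweight m n \<alpha> = (\<Prod>j\<in>{1..n}. m j (count_list \<alpha> j))"

definition GSR :: "('h::ab_group_add \<Rightarrow> 'h \<Rightarrow> complex) \<Rightarrow> nat \<Rightarrow> (nat \<Rightarrow> 'h set) \<Rightarrow>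
    (nat \<Rightarrow> 'h \<Rightarrow> 'h) \<Rightarrow> (nat \<Rightarrow> nat \<Rightarrow> real) \<Rightarrow> 'h set" where
  "GSR ip n Dm X m = {u \<in> Cinf n Dm X. \<exists>A>0. \<exists>C>0. \<forall>\<alpha>\<in>multiindices n.
      hnorm ip (mapply X \<alpha> u) \<le> C * A ^ length \<alpha> * mweight m n \<alpha>}"

fun powdom :: "'h set \<Rightarrow> ('h \<Rightarrow> 'h) \<Rightarrow> nat \<Rightarrow> 'h set" where
  "powdom Dm Y 0 = UNIV"
| "powdom Dm Y (Suc k) = {u \<in> powdom Dm Y k. (Y ^^ k) u \<in> Dm}"

definition GSR1 :: "('h::ab_group_add \<Rightarrow> 'h \<Rightarrow> complex) \<Rightarrow> 'h set \<Rightarrow> ('h \<Rightarrow> 'h) \<Rightarrow>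
    (nat \<Rightarrow> real) \<Rightarrow> 'h set" where
  "GSR1 ip Dm Y m = {u. (\<forall>k\<ge>1. u \<in> powdom Dm Y k) \<and> (\<exists>A>0. \<exists>C>0. \<forall>k\<ge>1.
      hnorm ip ((Y ^^ k) u) \<le> C * A ^ k * m k)}"

definition condA0 :: "nat \<Rightarrow> (nat \<Rightarrow> nat \<Rightarrow> real) \<Rightarrow> bool" where
  "condA0 n m \<longleftrightarrow> (\<forall>j\<in>{1..n}. m j 0 = 1 \<and> m j 1 = 1)"

definition condA1 :: "nat \<Rightarrow> (nat \<Rightarrow> nat \<Rightarrow> real) \<Rightarrow> bool" where
  "condA1 n m \<longleftrightarrow> (\<forall>j\<in>{1..n}. \<forall>p\<ge>1. (m j p)\<^sup>2 \<le> m j (p - 1) * m j (p + 1))"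

definition condA2 :: "nat \<Rightarrow> (nat \<Rightarrow> nat \<Rightarrow> real) \<Rightarrow> bool" where
  "condA2 n m \<longleftrightarrow> (\<exists>H>0. \<forall>j\<in>{1..n}. \<forall>p q. m j (p + q) \<le> H ^ (p + q) * m j p * m j q)"

definition condA3 :: "(nat \<Rightarrow> real) \<Rightarrow> (nat \<Rightarrow> real) \<Rightarrow> bool" where
  "condA3 mj mk \<longleftrightarrow> (\<exists>L\<ge>1. \<forall>p\<ge>1. real p * mj (p - 1) * mk (p - 1) \<le> L * mj p * mk p)"

end

theory Submission
  imports Defs
begin


locale hs =
  fixes sc :: "complex \<Rightarrow> 'h::ab_group_add \<Rightarrow> 'h" and ip :: "'h \<Rightarrow> 'h \<Rightarrow> complex"
  assumes H: "complex_hilbert_space sc ip"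
begin

abbreviation N where "N \<equiv> hnorm ip"

lemmas H' = H[unfolded complex_hilbert_space_def]
lemma ip_add_l: "ip (x + y) z = ip x z + ip y z" using conjunct1[OF conjunct2[OF H']] by blast
lemma ip_scale_l: "ip (sc t x) y = t * ip x y" using conjunct1[OF conjunct2[OF conjunct2[OF H']]] by blast
lemma ip_conj: "ip y x = cnj (ip x y)" using conjunct1[OF conjunct2[OF conjunct2[OF conjunct2[OF H']]]] by blast
lemma ip_nonneg: "0 \<le> Re (ip x x)" using conjunct1[OF conjunct2[OF conjunct2[OF conjunct2[OF conjunct2[OF H']]]]] by blast
lemma ip_def0: "ip x x = 0 \<Longrightarrow> x = 0" using conjunct1[OF conjunct2[OF conjunct2[OF conjunct2[OF conjunct2[OF conjunct2[OF H']]]]]] by blast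

lemma ip_add_r: "ip z (x + y) = ip z x + ip z y"
proof -
  have "ip z (x + y) = cnj (ip (x + y) z)" by (rule ip_conj)
  then show ?thesis by (simp add: ip_add_l ip_conj[of x z] ip_conj[of y z])
qed
lemma ip_scale_r: "ip x (sc t y) = cnj t * ip x y"
proof -
  have "ip x (sc t y) = cnj (ip (sc t y) x)" by (rule ip_conj)
  then show ?thesis by (simp add: ip_scale_l ip_conj[of y x])
qed
lemma ip_zero_l: "ip 0 y = 0"
  using ip_add_l[of 0 0 y] by simp
lemma ip_zero_r: "ip y 0 = 0"
  using ip_add_r[of y 0 0] by simp
lemma ip_minus_l: "ip (- x) y = - ip x y"
  using ip_add_l[of x "-x" y] by (simp add: ip_zero_l add_eq_0_iff)
lemma ip_minus_r: "ip y (- x) = - ip y x"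
  using ip_add_r[of y x "-x"] by (simp add: ip_zero_r add_eq_0_iff)
lemma ip_self_real: "ip x x = complex_of_real (Re (ip x x))"
proof -
  have "ip x x = cnj (ip x x)" by (rule ip_conj)
  then have "Im (ip x x) = 0" by (metis cnj.simps(2) neg_equal_zero)
  then show ?thesis by (simp add: complex_eq_iff)
qed

lemma N_nonneg: "0 \<le> N x" using ip_nonneg[of x] by (simp add: hnorm_def)
lemma N_sq: "(N x)^2 = Re (ip x x)" using ip_nonneg[of x] by (simp add: hnorm_def)

lemma expand: "ip (a + sc s b) (a + sc s b) = ip a a + cnj s * ip a b + s * cnj (ip a b) + s * cnj s * ip b b"
  by (simp add: ip_add_l ip_add_r ip_scale_l ip_scale_r algebra_simps ip_conj[of a b])

lemma CS: "cmod (ip a b) \<le> N a * N b"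
proof (cases "ip b b = 0")
  case True
  then have "b = 0" by (rule ip_def0)
  then show ?thesis by (simp add: ip_zero_r N_nonneg)
next
  case False
  define B where "B = Re (ip b b)"
  define A where "A = Re (ip a a)"
  define z where "z = ip a b"
  have Bpos: "B > 0" using False ip_nonneg[of b] ip_self_real[of b] B_def
    by (metis less_eq_real_def of_real_0)
  have bb: "ip b b = complex_of_real B" using ip_self_real B_def by simp
  have aa: "ip a a = complex_of_real A" using ip_self_real A_def by simp
  define s where "s = - z / complex_of_real B"
  have "0 \<le> Re (ip (a + sc s b) (a + sc s b))" by (rule ip_nonneg)
  also have "ip (a + sc s b) (a + sc s b) = complex_of_real (A - (cmod z)^2 / B)"
  proof -
    have "ip (a + sc s b) (a + sc s b) = A + cnj s * z + s * cnj z + s * cnj s * B"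
      using expand[of a s b] aa bb z_def by simp
    also have "\<dots> = A - z * cnj z / B"
      using Bpos by (simp add: s_def field_simps)
    also have "z * cnj z = complex_of_real ((cmod z)^2)" using complex_norm_square[of z] by simp
    finally show ?thesis using Bpos by simp
  qed
  finally have "(cmod z)^2 \<le> A * B" using Bpos by (simp add: field_simps)
  also have "A * B = (N a * N b)^2" using N_sq A_def B_def by (simp add: power_mult_distrib)
  finally have "(cmod z)^2 \<le> (N a * N b)^2" .
  then show ?thesis unfolding z_def
    by (meson N_nonneg mult_nonneg_nonneg power2_le_imp_le)
qed

lemma N_scale: "N (sc t a) = cmod t * N a"
proof -
  have e: "t * cnj t = complex_of_real ((cmod t)^2)" by (rule complex_norm_square[symmetric])
  have "ip (sc t a) (sc t a) = (t * cnj t) * ip a a" by (simp add: ip_scale_l ip_scale_r mult.assoc)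
  also have "\<dots> = complex_of_real ((cmod t)^2) * complex_of_real (Re (ip a a))"
    by (subst ip_self_real) (simp only: e)
  also have "\<dots> = complex_of_real ((cmod t)^2 * Re (ip a a))" by (simp only: of_real_mult)
  finally have "Re (ip (sc t a) (sc t a)) = (cmod t)^2 * Re (ip a a)" by simp
  then show ?thesis by (simp add: hnorm_def real_sqrt_mult)
qed

lemma N_add: "N (a + b) \<le> N a + N b"
proof -
  have e: "ip (a + b) (a + b) = ip a a + ip a b + cnj (ip a b) + ip b b"
    by (simp add: ip_add_l ip_add_r ip_conj[of a b])
  have "(N (a+b))^2 = (N a)^2 + 2 * Re (ip a b) + (N b)^2"
    unfolding N_sq e by simp
  also have "\<dots> \<le> (N a)^2 + 2 * (N a * N b) + (N b)^2"
    using CS[of a b] complex_Re_le_cmod[of "ip a b"] by linarith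
  also have "\<dots> = (N a + N b)^2" by (simp add: power2_eq_square algebra_simps)
  finally show ?thesis by (meson N_nonneg add_nonneg_nonneg power2_le_imp_le)
qed

lemma N_add_scale: "N (a + sc t b) \<le> N a + cmod t * N b"
  using N_add[of a "sc t b"] N_scale by simp

lemma ipphi: "cmod (ip w (a + sc t b)) \<le> cmod (ip w a) + cmod t * cmod (ip w b)"
proof -
  have "cmod (ip w (a + sc t b)) = cmod (ip w a + cnj t * ip w b)" by (simp add: ip_add_r ip_scale_r)
  also have "\<dots> \<le> cmod (ip w a) + cmod (cnj t * ip w b)" by (rule norm_triangle_ineq)
  also have "cmod (cnj t * ip w b) = cmod t * cmod (ip w b)" by (simp add: norm_mult)
  finally show ?thesis .
qed

end


lemma mapply_append: "mapply X (\<alpha> @ \<beta>) v = mapply X \<alpha> (mapply X \<beta> v)"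
  by (induction \<alpha>) auto

fun ninv :: "nat set \<Rightarrow> nat set \<Rightarrow> nat list \<Rightarrow> nat" where
  "ninv A B [] = 0"
| "ninv A B (x # xs) = (if x \<in> A then length (filter (\<lambda>y. y \<in> B) xs) else 0) + ninv A B xs"

lemma inv_swap:
  assumes "x \<in> A" "y \<in> B" "A \<inter> B = {}"
  shows "ninv A B (g1 @ x # y # g2) = Suc (ninv A B (g1 @ y # x # g2))"
  using assms by (induction g1) auto

lemma inv_del: "ninv A B (g1 @ g2) \<le> ninv A B (g1 @ y # x # g2)"
proof (induction g1)
  case Nil then show ?case by simp
next
  case (Cons a g1)
  have "length (filter (\<lambda>y. y \<in> B) (g1 @ g2)) \<le> length (filter (\<lambda>z. z \<in> B) (g1 @ y # x # g2))"
    by simp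
  with Cons show ?case by simp
qed

lemma inv_exists_swap:
  assumes "set g \<subseteq> A \<union> B" "ninv A B g \<noteq> 0"
  shows "\<exists>g1 x y g2. g = g1 @ x # y # g2 \<and> x \<in> A \<and> y \<in> B"
  using assms
proof (induction g)
  case Nil then show ?case by simp
next
  case (Cons z g)
  show ?case
  proof (cases "ninv A B g = 0")
    case False
    then obtain g1 x y g2 where "g = g1 @ x # y # g2 \<and> x \<in> A \<and> y \<in> B" using Cons by auto
    then show ?thesis by (metis append_Cons)
  next
    case True
    with Cons.prems have zA: "z \<in> A" and ne: "filter (\<lambda>y. y \<in> B) g \<noteq> []" by (auto split: if_splits)
    then obtain w g' where g: "g = w # g'" by (cases g) auto
    show ?thesis
    proof (cases "w \<in> B")
      case True then show ?thesis using zA g by (metis append_Nil)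
    next
      case False
      then have "w \<in> A" using Cons.prems g by auto
      moreover have "filter (\<lambda>y. y \<in> B) g' \<noteq> []" using ne g False by auto
      ultimately have "ninv A B g \<noteq> 0" using g by simp
      with True show ?thesis by simp
    qed
  qed
qed

lemma inv_normal:
  assumes "set g \<subseteq> A \<union> B" "ninv A B g = 0" "A \<inter> B = {}"
  shows "g = filter (\<lambda>x. x \<in> B) g @ filter (\<lambda>x. x \<in> A) g"
  using assms
proof (induction g)
  case Nil then show ?case by simp
next
  case (Cons z g)
  then have IH: "g = filter (\<lambda>x. x \<in> B) g @ filter (\<lambda>x. x \<in> A) g" by (auto split: if_splits)
  show ?case
  proof (cases "z \<in> A")
    case True
    then have "filter (\<lambda>x. x \<in> B) g = []" using Cons.prems by (auto split: if_splits)
    then show ?thesis using True Cons.prems IH by auto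
  next
    case False
    then have "z \<in> B" using Cons.prems by auto
    then show ?thesis using False IH by simp
  qed
qed

lemma inv_bound: "ninv A B g \<le> length (filter (\<lambda>x. x \<in> A) g) * length (filter (\<lambda>x. x \<in> B) g)"
proof (induction g)
  case Nil then show ?case by simp
next
  case (Cons z g)
  then show ?case by (auto simp: algebra_simps)
qed

lemma pascal_sum:
  fixes a :: "nat \<Rightarrow> real"
  shows "(\<Sum>r\<le>Suc I. real (Suc I choose r) * a r)
     = (\<Sum>r\<le>I. real (I choose r) * a r) + (\<Sum>r\<le>I. real (I choose r) * a (Suc r))"
proof -
  have "(\<Sum>r\<le>Suc I. real (Suc I choose r) * a r) = a 0 + (\<Sum>r\<le>I. real (Suc I choose Suc r) * a (Suc r))"
    by (subst sum.atMost_Suc_shift) simp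
  also have "\<dots> = a 0 + (\<Sum>r\<le>I. real (I choose r) * a (Suc r)) + (\<Sum>r\<le>I. real (I choose Suc r) * a (Suc r))"
    by (simp add: sum.distrib algebra_simps)
  also have "(\<Sum>r\<le>I. real (I choose r) * a r) = a 0 + (\<Sum>r<I. real (I choose Suc r) * a (Suc r))"
    by (subst sum.atMost_shift) simp
  moreover have "(\<Sum>r<I. real (I choose Suc r) * a (Suc r)) = (\<Sum>r\<le>I. real (I choose Suc r) * a (Suc r))"
    by (simp add: lessThan_Suc_atMost[symmetric])
  ultimately show ?thesis by simp
qed

locale ops = hs sc ip for sc :: "complex \<Rightarrow> 'h::ab_group_add \<Rightarrow> 'h" and ip +
  fixes n :: nat and Dm :: "nat \<Rightarrow> 'h set" and X :: "nat \<Rightarrow> 'h \<Rightarrow> 'h" and D :: "'h set"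
    and c :: "nat \<Rightarrow> nat \<Rightarrow> complex"
  assumes opsA: "\<forall>j\<in>{1..n}. is_operator sc (Dm j) (X j)"
  and hermA: "\<forall>j\<in>{1..n}. hermitian_op ip (Dm j) (X j) \<or> skew_hermitian_op ip (Dm j) (X j)"
  and DA: "\<forall>j\<in>{1..n}. D \<subseteq> Dm j \<and> X j ` D \<subseteq> D"
  and commA: "\<forall>i\<in>{1..n}. \<forall>j\<in>{1..n}. \<forall>v\<in>D. X i (X j v) - X j (X i v) = sc (c i j) v"
begin

lemma XD: "j \<in> {1..n} \<Longrightarrow> v \<in> D \<Longrightarrow> X j v \<in> D" using DA by (meson image_subset_iff)
lemma DDm: "j \<in> {1..n} \<Longrightarrow> v \<in> D \<Longrightarrow> v \<in> Dm j" using DA by auto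

lemma mapply_D: "set g \<subseteq> {1..n} \<Longrightarrow> v \<in> D \<Longrightarrow> mapply X g v \<in> D"
  by (induction g) (auto intro: XD)

lemma mapply_lin:
  assumes "set g \<subseteq> {1..n}" "a \<in> D" "b \<in> D"
  shows "mapply X g (a + sc t b) = mapply X g a + sc t (mapply X g b)"
  using assms
proof (induction g)
  case Nil then show ?case by simp
next
  case (Cons z g)
  then have z: "z \<in> {1..n}" and IH: "mapply X g (a + sc t b) = mapply X g a + sc t (mapply X g b)" by auto
  have o: "is_operator sc (Dm z) (X z)" using opsA z by auto
  have p: "mapply X g a \<in> Dm z" "mapply X g b \<in> Dm z"
    using Cons.prems mapply_D DDm z by auto
  then have q: "sc t (mapply X g b) \<in> Dm z" using o unfolding is_operator_def by auto
  have "X z (mapply X g a + sc t (mapply X g b)) = X z (mapply X g a) + X z (sc t (mapply X g b))"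
    using o p q unfolding is_operator_def by auto
  also have "X z (sc t (mapply X g b)) = sc t (X z (mapply X g b))"
    using o p unfolding is_operator_def by auto
  finally show ?case using IH by simp
qed

lemma swap:
  assumes "x \<in> {1..n}" "y \<in> {1..n}" "set g1 \<subseteq> {1..n}" "set g2 \<subseteq> {1..n}" "v \<in> D"
  shows "mapply X (g1 @ x # y # g2) v = mapply X (g1 @ y # x # g2) v + sc (c x y) (mapply X (g1 @ g2) v)"
proof -
  define w where "w = mapply X g2 v"
  have w: "w \<in> D" using assms mapply_D w_def by auto
  have "X x (X y w) - X y (X x w) = sc (c x y) w"
    using commA assms w by blast
  then have "X x (X y w) = sc (c x y) w + X y (X x w)" by (simp add: diff_eq_eq)
  then have "X x (X y w) = X y (X x w) + sc (c x y) w" by (simp add: add.commute)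
  moreover have "X y (X x w) \<in> D" using w assms XD by auto
  ultimately show ?thesis
    using mapply_lin[of g1 "X y (X x w)" w "c x y"] assms w
    by (simp add: mapply_append w_def)
qed

lemma cmod_sym: "cmod (ip a b) = cmod (ip b a)"
proof -
  have "ip a b = cnj (ip b a)" by (rule ip_conj)
  then show ?thesis by simp
qed

lemma adj0:
  assumes "j \<in> {1..n}" "a \<in> D" "b \<in> D"
  shows "cmod (ip (X j a) b) = cmod (ip a (X j b))"
proof -
  have ab: "a \<in> Dm j" "b \<in> Dm j" using assms DDm by auto
  have "hermitian_op ip (Dm j) (X j) \<or> skew_hermitian_op ip (Dm j) (X j)" using hermA assms by blast
  then show ?thesis
  proof
    assume "hermitian_op ip (Dm j) (X j)"
    then have "ip (X j a) b = ip a (X j b)" using ab unfolding hermitian_op_def by blast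
    then show ?thesis by simp
  next
    assume "skew_hermitian_op ip (Dm j) (X j)"
    then have "ip (X j a) b = - ip a (X j b)" using ab unfolding skew_hermitian_op_def by blast
    then show ?thesis by simp
  qed
qed

lemma adj1:
  assumes "set r \<subseteq> {1..n}" "a \<in> D" "b \<in> D"
  shows "cmod (ip (mapply X r a) b) = cmod (ip a (mapply X (rev r) b))"
  using assms
proof (induction r arbitrary: b)
  case Nil then show ?case by simp
next
  case (Cons z r)
  have "cmod (ip (mapply X (z # r) a) b) = cmod (ip (mapply X r a) (X z b))"
    using Cons.prems adj0 mapply_D by simp
  also have "\<dots> = cmod (ip a (mapply X (rev r) (X z b)))"
    using Cons XD by auto
  finally show ?case by (simp add: mapply_append)
qed

lemma adj2:
  assumes "set r \<subseteq> {1..n}" "a \<in> D" "b \<in> D"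
  shows "cmod (ip a (mapply X r b)) = cmod (ip (mapply X (rev r) a) b)"
proof -
  have "cmod (ip a (mapply X r b)) = cmod (ip (mapply X r b) a)" by (rule cmod_sym)
  also have "\<dots> = cmod (ip b (mapply X (rev r) a))" using adj1 assms by simp
  also have "\<dots> = cmod (ip (mapply X (rev r) a) b)" by (rule cmod_sym)
  finally show ?thesis .
qed

definition delrel :: "nat set \<Rightarrow> nat set \<Rightarrow> nat \<Rightarrow> nat list \<Rightarrow> nat list \<Rightarrow> bool" where
  "delrel A B r g g' \<longleftrightarrow> (\<exists>ps. length ps = r \<and> (\<forall>p\<in>set ps. fst p \<in> A \<and> snd p \<in> B \<and> c (fst p) (snd p) \<noteq> 0)
     \<and> (\<forall>z. count_list g z = count_list g' z + count_list (map fst ps) z + count_list (map snd ps) z))"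

lemma delrel_refl: "delrel A B 0 g g"
  unfolding delrel_def by auto

lemma delrel_perm: "(\<forall>z. count_list g z = count_list h z) \<Longrightarrow> delrel A B r h g' \<Longrightarrow> delrel A B r g g'"
  unfolding delrel_def by simp

lemma delrel_step:
  assumes "delrel A B r (g1 @ g2) g'" "x \<in> A" "y \<in> B" "c x y \<noteq> 0"
  shows "delrel A B (Suc r) (g1 @ x # y # g2) g'"
proof -
  obtain ps where ps: "length ps = r" "\<forall>p\<in>set ps. fst p \<in> A \<and> snd p \<in> B \<and> c (fst p) (snd p) \<noteq> 0"
    "\<forall>z. count_list (g1 @ g2) z = count_list g' z + count_list (map fst ps) z + count_list (map snd ps) z"
    using assms(1) unfolding delrel_def by blast
  show ?thesis unfolding delrel_def
    apply (rule exI[of _ "(x,y) # ps"])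
    using ps assms by auto
qed

lemma swap_bound:
  assumes AB: "A \<inter> B = {}" "A \<subseteq> {1..n}" "B \<subseteq> {1..n}"
    and phi: "\<And>a b t. phi (a + sc t b) \<le> phi a + cmod t * phi b"
    and v: "v \<in> D" and cm: "\<forall>x\<in>A. \<forall>y\<in>B. cmod (c x y) \<le> cm" "0 \<le> cm"
  shows "\<forall>g G. set g \<subseteq> A \<union> B \<longrightarrow> ninv A B g \<le> I \<longrightarrow> (\<forall>r. 0 \<le> G r) \<longrightarrow>
    (\<forall>r g'. delrel A B r g g' \<longrightarrow> ninv A B g' = 0 \<longrightarrow> phi (mapply X g' v) \<le> G r) \<longrightarrow>
    phi (mapply X g v) \<le> (\<Sum>r\<le>I. real (I choose r) * cm ^ r * G r)"
proof (induction I)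
  case 0
  show ?case
  proof (intro allI impI)
    fix g G assume "set g \<subseteq> A \<union> B" "ninv A B g \<le> 0" "\<forall>r. 0 \<le> G r"
      "\<forall>r g'. delrel A B r g g' \<longrightarrow> ninv A B g' = 0 \<longrightarrow> phi (mapply X g' v) \<le> G r"
    then show "phi (mapply X g v) \<le> (\<Sum>r\<le>0. real (0 choose r) * cm ^ r * G r)"
      using delrel_refl by simp
  qed
next
  case (Suc I)
  show ?case
  proof (intro allI impI)
    fix g G assume g: "set g \<subseteq> A \<union> B" and ig: "ninv A B g \<le> Suc I" and G0: "\<forall>r. 0 \<le> G r"
      and hyp: "\<forall>r g'. delrel A B r g g' \<longrightarrow> ninv A B g' = 0 \<longrightarrow> phi (mapply X g' v) \<le> G r"
    have sumnn: "\<And>J F. (\<forall>r. 0 \<le> F r) \<Longrightarrow> 0 \<le> (\<Sum>r\<le>J. real (J choose r) * cm ^ r * F r)"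
      using cm(2) by (intro sum_nonneg) auto
    show "phi (mapply X g v) \<le> (\<Sum>r\<le>Suc I. real (Suc I choose r) * cm ^ r * G r)"
    proof (cases "ninv A B g = 0")
      case True
      then have "phi (mapply X g v) \<le> G 0" using hyp delrel_refl by blast
      also have "G 0 = (\<Sum>r\<le>0. real (Suc I choose r) * cm ^ r * G r)" by simp
      also have "\<dots> \<le> (\<Sum>r\<le>Suc I. real (Suc I choose r) * cm ^ r * G r)"
        using G0 cm(2) by (intro sum_mono2) auto
      finally show ?thesis .
    next
      case False
      then obtain g1 x y g2 where gd: "g = g1 @ x # y # g2" "x \<in> A" "y \<in> B"
        using inv_exists_swap g by blast
      define gs where "gs = g1 @ y # x # g2"
      have sets: "set g1 \<subseteq> {1..n}" "set g2 \<subseteq> {1..n}" "x \<in> {1..n}" "y \<in> {1..n}"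
        using g gd AB by auto
      have eq: "mapply X g v = mapply X gs v + sc (c x y) (mapply X (g1 @ g2) v)"
        unfolding gd gs_def using swap sets v by blast
      have igs: "ninv A B g = Suc (ninv A B gs)" unfolding gd gs_def using inv_swap gd AB by blast
      have i12: "ninv A B (g1 @ g2) \<le> ninv A B gs" unfolding gs_def by (rule inv_del)
      have cnt: "\<forall>z. count_list g z = count_list gs z" unfolding gd gs_def by simp
      have hyps: "\<forall>r g'. delrel A B r gs g' \<longrightarrow> ninv A B g' = 0 \<longrightarrow> phi (mapply X g' v) \<le> G r"
        using hyp delrel_perm[OF cnt] by blast
      have sgs: "set gs \<subseteq> A \<union> B" using g unfolding gd gs_def by auto
      have igs2: "ninv A B gs \<le> I" using igs ig by simp
      have b1: "phi (mapply X gs v) \<le> (\<Sum>r\<le>I. real (I choose r) * cm ^ r * G r)"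
        by (rule Suc.IH[THEN spec, THEN spec, THEN mp, THEN mp, THEN mp, THEN mp, OF sgs igs2 G0 hyps])
      have b2: "cmod (c x y) * phi (mapply X (g1 @ g2) v) \<le> cm * (\<Sum>r\<le>I. real (I choose r) * cm ^ r * G (Suc r))"
      proof (cases "c x y = 0")
        case True
        then show ?thesis using cm(2) G0 sumnn[of "\<lambda>r. G (Suc r)" I] by simp
      next
        case False
        have s12: "set (g1 @ g2) \<subseteq> A \<union> B" using g unfolding gd by auto
        have i12': "ninv A B (g1 @ g2) \<le> I" using i12 igs ig by simp
        have G0': "\<forall>r. 0 \<le> G (Suc r)" using G0 by simp
        have hyp2: "\<forall>r g'. delrel A B r (g1 @ g2) g' \<longrightarrow> ninv A B g' = 0 \<longrightarrow> phi (mapply X g' v) \<le> G (Suc r)"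
          using hyp delrel_step[OF _ gd(2,3) False] unfolding gd by blast
        have le: "phi (mapply X (g1 @ g2) v) \<le> (\<Sum>r\<le>I. real (I choose r) * cm ^ r * G (Suc r))"
          by (rule Suc.IH[THEN spec, THEN spec, THEN mp, THEN mp, THEN mp, THEN mp, OF s12 i12' G0' hyp2])
        have cxy: "cmod (c x y) \<le> cm" using cm gd by auto
        have S0: "0 \<le> (\<Sum>r\<le>I. real (I choose r) * cm ^ r * G (Suc r))" using sumnn[OF G0'] .
        have "cmod (c x y) * phi (mapply X (g1 @ g2) v) \<le> cmod (c x y) * (\<Sum>r\<le>I. real (I choose r) * cm ^ r * G (Suc r))"
          using le by (rule mult_left_mono) simp
        also have "\<dots> \<le> cm * (\<Sum>r\<le>I. real (I choose r) * cm ^ r * G (Suc r))"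
          using cxy S0 by (rule mult_right_mono)
        finally show ?thesis .
      qed
      have "phi (mapply X g v) \<le> phi (mapply X gs v) + cmod (c x y) * phi (mapply X (g1 @ g2) v)"
        unfolding eq by (rule phi)
      also have "\<dots> \<le> (\<Sum>r\<le>I. real (I choose r) * cm ^ r * G r) + (\<Sum>r\<le>I. real (I choose r) * cm ^ Suc r * G (Suc r))"
      proof -
        have eq2: "cm * (\<Sum>r\<le>I. real (I choose r) * cm ^ r * G (Suc r)) = (\<Sum>r\<le>I. real (I choose r) * cm ^ Suc r * G (Suc r))"
          by (simp add: sum_distrib_left mult_ac)
        show ?thesis using b1 b2 eq2 by linarith
      qed
      also have "\<dots> = (\<Sum>r\<le>Suc I. real (Suc I choose r) * cm ^ r * G r)"
        using pascal_sum[of I "\<lambda>r. cm ^ r * G r"] by (simp add: mult.assoc)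
      finally show ?thesis .
    qed
  qed
qed

end


section \<open>Single sequences\<close>

lemma ratio_step:
  fixes s :: "nat \<Rightarrow> real"
  assumes pos: "\<forall>p. s p > 0" and lc: "\<forall>p\<ge>1. (s p)^2 \<le> s (p - 1) * s (p + 1)"
  shows "s (Suc q) / s q \<le> s (Suc (Suc q)) / s (Suc q)"
proof -
  have "(s (Suc q))^2 \<le> s q * s (Suc (Suc q))" using lc[rule_format, of "Suc q"] by simp
  then show ?thesis using pos by (simp add: divide_simps power2_eq_square mult.commute)
qed

lemma ratio_mono:
  fixes s :: "nat \<Rightarrow> real"
  assumes pos: "\<forall>p. s p > 0" and lc: "\<forall>p\<ge>1. (s p)^2 \<le> s (p - 1) * s (p + 1)"
  shows "s (Suc a) / s a \<le> s (Suc (a + b)) / s (a + b)"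
proof (induction b)
  case 0 then show ?case by simp
next
  case (Suc b)
  also have "s (Suc (a + b)) / s (a + b) \<le> s (Suc (Suc (a + b))) / s (Suc (a + b))"
    by (rule ratio_step[OF pos lc])
  finally show ?case by simp
qed

lemma superadd:
  fixes s :: "nat \<Rightarrow> real"
  assumes pos: "\<forall>p. s p > 0" and lc: "\<forall>p\<ge>1. (s p)^2 \<le> s (p - 1) * s (p + 1)" and s0: "s 0 = 1"
  shows "s a * s b \<le> s (a + b)"
proof (induction b)
  case 0 then show ?case using s0 by simp
next
  case (Suc b)
  have r: "s (Suc b) / s b \<le> s (Suc (b + a)) / s (b + a)" by (rule ratio_mono[OF pos lc])
  have sb: "s b > 0" using pos by blast
  have sab: "s (a + b) > 0" using pos by blast
  have "s a * s (Suc b) = (s a * s b) * (s (Suc b) / s b)" using sb by (simp add: field_simps)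
  also have "\<dots> \<le> s (a + b) * (s (Suc b) / s b)"
    using Suc pos by (intro mult_right_mono) (auto intro: divide_nonneg_nonneg less_imp_le)
  also have "\<dots> \<le> s (a + b) * (s (Suc (a + b)) / s (a + b))"
    using r pos by (intro mult_left_mono) (auto simp: add.commute less_imp_le)
  also have "\<dots> = s (a + Suc b)" using sab by (simp add: field_simps)
  finally show ?case .
qed

lemma prod_super:
  fixes s :: "nat \<Rightarrow> real" and d :: "nat \<Rightarrow> nat"
  assumes pos: "\<forall>p. s p > 0" and lc: "\<forall>p\<ge>1. (s p)^2 \<le> s (p - 1) * s (p + 1)" and s0: "s 0 = 1"
    and F: "finite F"
  shows "s k * (\<Prod>z\<in>F. s (d z)) \<le> s (k + (\<Sum>z\<in>F. d z))"
  using F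
proof (induction F arbitrary: k rule: finite_induct)
  case empty then show ?case by simp
next
  case (insert a F)
  have "s k * (\<Prod>z\<in>insert a F. s (d z)) = (s k * s (d a)) * (\<Prod>z\<in>F. s (d z))"
    using insert by (simp add: mult_ac)
  also have "\<dots> \<le> s (k + d a) * (\<Prod>z\<in>F. s (d z))"
    using superadd[OF pos lc s0] pos by (intro mult_right_mono prod_nonneg) (auto intro: less_imp_le)
  also have "\<dots> \<le> s (k + d a + (\<Sum>z\<in>F. d z))" by (rule insert.IH)
  also have "k + d a + (\<Sum>z\<in>F. d z) = k + (\<Sum>z\<in>insert a F. d z)" using insert by simp
  finally show ?case .
qed

lemma fact_pair:
  fixes s t :: "nat \<Rightarrow> real"
  assumes pos: "\<forall>p. s p > 0" "\<forall>p. t p > 0" and s0: "s 0 = 1" "t 0 = 1" and L: "L \<ge> 0"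
    and A3: "\<forall>p\<ge>1. real p * s (p - 1) * t (p - 1) \<le> L * s p * t p"
  shows "fact d \<le> L ^ d * s d * t d"
proof (induction d)
  case 0 then show ?case using s0 by simp
next
  case (Suc d)
  have "fact (Suc d) = real (Suc d) * fact d" by simp
  also have "\<dots> \<le> real (Suc d) * (L ^ d * s d * t d)" using Suc by (intro mult_left_mono) auto
  also have "\<dots> = L ^ d * (real (Suc d) * s d * t d)" by (simp add: mult_ac)
  also have "\<dots> \<le> L ^ d * (L * s (Suc d) * t (Suc d))"
    using A3[rule_format, of "Suc d"] L by (intro mult_left_mono) auto
  also have "\<dots> = L ^ Suc d * s (Suc d) * t (Suc d)" by (simp add: mult_ac)
  finally show ?case .
qed

lemma W1:
  fixes s t :: "nat \<Rightarrow> real"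
  assumes pos: "\<forall>p. s p > 0" "\<forall>p. t p > 0" and s0: "s 0 = 1" "t 0 = 1" and L: "L \<ge> 0"
    and A3: "\<forall>p\<ge>1. real p * s (p - 1) * t (p - 1) \<le> L * s p * t p"
    and lct: "\<forall>p\<ge>1. (t p)^2 \<le> t (p - 1) * t (p + 1)"
  shows "fact d * t k \<le> L ^ d * s d * t (k + d)"
proof -
  have "fact d * t k \<le> (L ^ d * s d * t d) * t k"
    using fact_pair[OF pos s0 L A3] pos by (intro mult_right_mono) (auto intro: less_imp_le)
  also have "\<dots> = (L ^ d * s d) * (t k * t d)" by (simp add: mult_ac)
  also have "\<dots> \<le> (L ^ d * s d) * t (k + d)"
  proof -
    have "0 \<le> s d" using pos(1) less_imp_le by blast
    then have "0 \<le> L ^ d * s d" using L by simp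
    then show ?thesis using superadd[OF pos(2) lct s0(2)] by (intro mult_left_mono) auto
  qed
  finally show ?thesis .
qed

lemma fact_add_le: "fact (a + b) \<le> 2 ^ (a + b) * fact a * (fact b :: nat)"
proof -
  have "fact a * fact b * ((a + b) choose a) = (fact (a + b) :: nat)"
    using binomial_fact_lemma[of a "a + b"] by simp
  moreover have "(a + b) choose a \<le> 2 ^ (a + b)" by (rule binomial_le_pow2)
  ultimately show ?thesis
    by (metis mult.commute mult_le_mono2 mult.assoc)
qed

lemma multinom:
  assumes "finite F"
  shows "fact (\<Sum>z\<in>F. d z) \<le> (2 ^ card F) ^ (\<Sum>z\<in>F. d z) * (\<Prod>z\<in>F. fact (d z) :: nat)"
  using assms
proof (induction F rule: finite_induct)
  case empty then show ?case by simp
next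
  case (insert a F)
  define R where "R = (\<Sum>z\<in>F. d z)"
  have "fact (\<Sum>z\<in>insert a F. d z) = (fact (d a + R) :: nat)" using insert by (simp add: R_def)
  also have "\<dots> \<le> 2 ^ (d a + R) * fact (d a) * fact R" by (rule fact_add_le)
  also have "\<dots> \<le> 2 ^ (d a + R) * fact (d a) * ((2 ^ card F) ^ R * (\<Prod>z\<in>F. fact (d z)))"
    using insert.IH unfolding R_def by (intro mult_le_mono2)
  also have "\<dots> = (2 ^ (d a + R) * (2 ^ card F) ^ R) * (fact (d a) * (\<Prod>z\<in>F. fact (d z)))"
    by (simp add: mult_ac)
  also have "\<dots> \<le> (2 ^ card (insert a F)) ^ (\<Sum>z\<in>insert a F. d z) * (\<Prod>z\<in>insert a F. fact (d z))"
  proof -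
    have "(2::nat) ^ (d a + R) * (2 ^ card F) ^ R = 2 ^ (d a + R + card F * R)"
      by (simp only: power_add power_mult)
    also have "\<dots> \<le> 2 ^ ((card F + 1) * (d a + R))"
      by (intro power_increasing) (auto simp: algebra_simps)
    also have "\<dots> = (2 ^ card (insert a F)) ^ (\<Sum>z\<in>insert a F. d z)"
    proof -
      have "(2::nat) ^ ((card F + 1) * (d a + R)) = (2 ^ (card F + 1)) ^ (d a + R)" by (rule power_mult)
      moreover have "card (insert a F) = card F + 1" using insert by simp
      moreover have "(\<Sum>z\<in>insert a F. d z) = d a + R" using insert by (simp add: R_def)
      ultimately show ?thesis by simp
    qed
    finally have e: "(2::nat) ^ (d a + R) * (2 ^ card F) ^ R \<le> (2 ^ card (insert a F)) ^ (\<Sum>z\<in>insert a F. d z)" .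
    have "(\<Prod>z\<in>insert a F. fact (d z)) = fact (d a) * (\<Prod>z\<in>F. fact (d z) :: nat)" using insert by simp
    then show ?thesis using e by (simp add: mult_le_mono1)
  qed
  finally show ?case .
qed

lemma pow_fact: "y ^ r * fact y \<le> (fact (y + r) :: nat)"
proof (induction r)
  case 0 then show ?case by simp
next
  case (Suc r)
  have "y ^ Suc r * fact y = y * (y ^ r * fact y)" by simp
  also have "\<dots> \<le> Suc (y + r) * fact (y + r)" using Suc by (intro mult_le_mono) auto
  also have "\<dots> = fact (y + Suc r)" by simp
  finally show ?case .
qed

lemma ypow: "y ^ r \<le> 2 ^ (y + r) * (fact r :: nat)"
proof -
  have "y ^ r * fact y \<le> 2 ^ (y + r) * fact y * fact r"
    using pow_fact[of y r] fact_add_le[of y r] by linarith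
  then have "y ^ r * fact y \<le> (2 ^ (y + r) * fact r) * fact y" by (simp add: mult_ac)
  then show ?thesis using fact_gt_zero[of y] by (simp only: mult_le_cancel2) simp
qed

lemma binom_bound: "r \<le> P \<Longrightarrow> ((P * b) choose r) \<le> 2 ^ (P + b) * 4 ^ r * fact r"
proof -
  assume "r \<le> P"
  have "((P * b) choose r) * fact r \<le> (P * b) ^ r" by (rule binomial_fact_pow)
  also have "\<dots> = P ^ r * b ^ r" by (simp add: power_mult_distrib)
  also have "\<dots> \<le> (2 ^ (P + r) * fact r) * (2 ^ (b + r) * fact r)" by (intro mult_le_mono ypow)
  also have "\<dots> \<le> (2 ^ (P + b) * 4 ^ r * fact r) * fact r"
  proof -
    have f: "(2::nat) ^ r * 2 ^ r = 4 ^ r"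
      using power_mult_distrib[of "2::nat" 2 r] by simp
    have "(2::nat) ^ (P + r) * 2 ^ (b + r) = 2 ^ P * 2 ^ b * (2 ^ r * 2 ^ r)"
      by (simp add: power_add mult_ac)
    also have "\<dots> = 2 ^ (P + b) * 4 ^ r" using f by (simp add: power_add)
    finally have "(2::nat) ^ (P + r) * 2 ^ (b + r) = 2 ^ (P + b) * 4 ^ r" .
    then show ?thesis by (simp add: mult_ac)
  qed
  finally show ?thesis using fact_gt_zero[of r] by (simp only: mult_le_cancel2) simp
qed

lemma sum_if_const:
  fixes T :: real
  shows "(\<Sum>r\<le>N. if r \<le> P then T else 0) = real (Suc (min N P)) * T"
proof (induction N)
  case 0 then show ?case by simp
next
  case (Suc N)
  show ?case
  proof (cases "Suc N \<le> P")
    case True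
    then have "min (Suc N) P = Suc (min N P)" by simp
    then show ?thesis using Suc True by (simp add: algebra_simps)
  next
    case False
    then have "min (Suc N) P = min N P" by simp
    then show ?thesis using Suc False by simp
  qed
qed

lemma cancel_aux: "(f::real) \<noteq> 0 \<Longrightarrow> (a * f) * y * (z / f) = a * y * z"
  by (simp add: field_simps)

lemma sumbound:
  fixes y Lw K :: real
  assumes y: "0 \<le> y" and Lw: "0 \<le> Lw" and K: "0 \<le> K"
  shows "(\<Sum>r\<le>P * b. real ((P * b) choose r) * y ^ r * (if r \<le> P then K * Lw ^ r / fact r else 0))
     \<le> K * (16 * max 1 (y * Lw)) ^ (P + b)"
proof -
  define Y where "Y = 4 * max 1 (y * Lw)"
  have Y1: "1 \<le> Y" unfolding Y_def by simp
  define T where "T = K * 2 ^ (P + b) * Y ^ P"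
  have T0: "0 \<le> T" unfolding T_def using K Y1 by simp
  have trm: "real ((P * b) choose r) * y ^ r * (if r \<le> P then K * Lw ^ r / fact r else 0)
      \<le> (if r \<le> P then T else 0)" for r
  proof (cases "r \<le> P")
    case True
    have bb: "real ((P * b) choose r) \<le> 2 ^ (P + b) * 4 ^ r * fact r"
    proof -
      have "real ((P * b) choose r) \<le> real (2 ^ (P + b) * 4 ^ r * fact r)"
        using binom_bound[OF True, of b] by (simp only: of_nat_le_iff)
      also have "real (2 ^ (P + b) * 4 ^ r * fact r) = 2 ^ (P + b) * 4 ^ r * fact r" by simp
      finally show ?thesis .
    qed
    have "real ((P * b) choose r) * y ^ r * (K * Lw ^ r / fact r)
        \<le> (2 ^ (P + b) * 4 ^ r * fact r) * y ^ r * (K * Lw ^ r / fact r)"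
      using bb y K Lw by (intro mult_right_mono) auto
    also have "\<dots> = K * 2 ^ (P + b) * (4 * (y * Lw)) ^ r"
    proof -
      have f: "fact r \<noteq> (0::real)" by simp
      have "(2 ^ (P + b) * 4 ^ r * fact r) * y ^ r * (K * Lw ^ r / fact r)
          = (2 ^ (P + b) * 4 ^ r) * y ^ r * (K * Lw ^ r)" by (rule cancel_aux[OF f])
      also have "\<dots> = K * 2 ^ (P + b) * (4 ^ r * y ^ r * Lw ^ r)" by (simp only: mult_ac)
      also have "4 ^ r * y ^ r * Lw ^ r = (4 * (y * Lw)) ^ (r::nat)" by (simp only: power_mult_distrib mult.assoc)
      finally show ?thesis .
    qed
    also have "\<dots> \<le> K * 2 ^ (P + b) * Y ^ r"
      using K y Lw unfolding Y_def by (intro mult_left_mono power_mono) auto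
    also have "\<dots> \<le> K * 2 ^ (P + b) * Y ^ P"
      using K Y1 True by (intro mult_left_mono power_increasing) auto
    finally show ?thesis using True unfolding T_def by simp
  qed simp
  have "(\<Sum>r\<le>P * b. real ((P * b) choose r) * y ^ r * (if r \<le> P then K * Lw ^ r / fact r else 0))
      \<le> (\<Sum>r\<le>P * b. if r \<le> P then T else 0)"
    by (intro sum_mono trm)
  also have "\<dots> = real (Suc (min (P * b) P)) * T" by (rule sum_if_const)
  also have "\<dots> \<le> real (Suc P) * T" using T0 by (intro mult_right_mono) auto
  also have "\<dots> \<le> 2 ^ P * T"
  proof -
    have "Suc P \<le> 2 ^ P" by (induction P) auto
    then have "real (Suc P) \<le> real (2 ^ P)" by (simp only: of_nat_le_iff)
    then have "real (Suc P) \<le> 2 ^ P" by simp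
    then show ?thesis using T0 by (intro mult_right_mono) auto
  qed
  also have "\<dots> = K * (2 ^ P * 2 ^ (P + b)) * Y ^ P" unfolding T_def by (simp add: mult_ac)
  also have "\<dots> \<le> K * (4 ^ (P + b)) * Y ^ (P + b)"
  proof -
    have a: "(2::real) ^ P * 2 ^ (P + b) \<le> 4 ^ (P + b)"
    proof -
      have "(2::real) ^ P * 2 ^ (P + b) = 2 ^ (P + (P + b))" by (simp add: power_add)
      also have "\<dots> \<le> 2 ^ (2 * (P + b))" by (intro power_increasing) auto
      also have "\<dots> = (2 ^ 2) ^ (P + b)" by (rule power_mult)
      also have "\<dots> = 4 ^ (P + b)" by simp
      finally show ?thesis .
    qed
    have b: "Y ^ P \<le> Y ^ (P + b)" using Y1 by (intro power_increasing) auto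
    show ?thesis using a b K Y1 by (intro mult_mono mult_left_mono) auto
  qed
  also have "\<dots> = K * (16 * max 1 (y * Lw)) ^ (P + b)"
  proof -
    have "(4::real) ^ (P + b) * Y ^ (P + b) = (4 * Y) ^ (P + b)" by (rule power_mult_distrib[symmetric])
    moreover have "4 * Y = 16 * max 1 (y * Lw)" unfolding Y_def by simp
    ultimately show ?thesis by (simp only: mult.assoc)
  qed
  finally show ?thesis .
qed



lemma count_list_replicate: "count_list (replicate s i) z = (if z = i then s else 0)"
  by (induction s) auto

locale mainloc = ops sc ip n Dm X D c
  for sc :: "complex \<Rightarrow> 'h::ab_group_add \<Rightarrow> 'h" and ip n Dm X D c +
  fixes m :: "nat \<Rightarrow> nat \<Rightarrow> real" and u :: 'h and L H :: real
  assumes mpos: "\<forall>j\<in>{1..n}. \<forall>p. m j p > 0"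
  and A0: "condA0 n m" and A1: "condA1 n m"
  and H1: "H \<ge> 1" and Hd: "\<forall>j\<in>{1..n}. \<forall>p. m j (p + p) \<le> H ^ (p + p) * m j p * m j p"
  and L1: "L \<ge> 1"
  and LA3: "\<forall>i\<in>{1..n}. \<forall>j\<in>{1..n}. (c i j \<noteq> 0 \<or> c j i \<noteq> 0) \<longrightarrow>
      (\<forall>p\<ge>1. real p * m i (p - 1) * m j (p - 1) \<le> L * m i p * m j p)"
  and uD: "u \<in> D"
begin

definition wt :: "nat list \<Rightarrow> real" where
  "wt g = (\<Prod>z\<in>{1..n}. m z (count_list g z))"

lemma mpj: "j \<in> {1..n} \<Longrightarrow> \<forall>p. m j p > 0" using mpos by blast
lemma m0: "j \<in> {1..n} \<Longrightarrow> m j 0 = 1" using A0 unfolding condA0_def by blast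
lemma mlc: "j \<in> {1..n} \<Longrightarrow> \<forall>p\<ge>1. (m j p)^2 \<le> m j (p - 1) * m j (p + 1)"
  using A1 unfolding condA1_def by blast

lemma wt_nonneg: "0 \<le> wt g"
  unfolding wt_def using mpos by (intro prod_nonneg) (auto intro: less_imp_le)

lemma wt_pos: "0 < wt g"
  unfolding wt_def using mpos by (intro prod_pos) auto

lemma wt_cong: "(\<forall>z. count_list g z = count_list h z) \<Longrightarrow> wt g = wt h"
  unfolding wt_def by simp

lemma W:
  assumes i: "i \<in> {1..n}" and ys: "length ys = r" "set ys \<subseteq> {j \<in> {1..n}. j \<noteq> i \<and> (c i j \<noteq> 0 \<or> c j i \<noteq> 0)}"
    and cnt: "\<forall>z. count_list g z = count_list g' z + (if z = i then r else 0) + count_list ys z"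
  shows "fact r * wt g' \<le> (2 ^ n * L) ^ r * wt g"
proof -
  define F where "F = {1..n} - {i}"
  define d where "d z = count_list ys z" for z
  define k where "k z = count_list g' z" for z
  have finF: "finite F" unfolding F_def by simp
  have setF: "set ys \<subseteq> F" using ys unfolding F_def by auto
  have sumd: "(\<Sum>z\<in>F. d z) = r" unfolding d_def using sum_count_set[OF setF finF] ys by simp
  have di: "d i = 0" unfolding d_def using ys by (auto intro: count_notin)
  have wg': "wt g' = m i (k i) * (\<Prod>z\<in>F. m z (k z))"
    unfolding wt_def F_def k_def using i by (simp add: prod.remove)
  have wg: "wt g = m i (k i + r) * (\<Prod>z\<in>F. m z (k z + d z))"
  proof -
    have "wt g = m i (count_list g i) * (\<Prod>z\<in>F. m z (count_list g z))"
      unfolding wt_def F_def using i by (simp add: prod.remove)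
    moreover have "count_list g i = k i + r" using cnt di unfolding k_def d_def by simp
    moreover have "(\<Prod>z\<in>F. m z (count_list g z)) = (\<Prod>z\<in>F. m z (k z + d z))"
      by (rule prod.cong) (auto simp: cnt k_def d_def F_def)
    ultimately show ?thesis by simp
  qed
  have cardF: "card F \<le> n" unfolding F_def by (simp add: card_Diff_singleton_if)
  have mfn: "fact r \<le> (2 ^ n) ^ r * (\<Prod>z\<in>F. fact (d z) :: nat)"
  proof -
    have "fact r \<le> (2 ^ card F) ^ r * (\<Prod>z\<in>F. fact (d z) :: nat)"
      using multinom[OF finF, of d] sumd by simp
    also have "\<dots> \<le> (2 ^ n) ^ r * (\<Prod>z\<in>F. fact (d z))"
      using cardF by (intro mult_le_mono1 power_mono power_increasing) auto
    finally show ?thesis .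
  qed
  have mf: "fact r \<le> (2 ^ n) ^ r * (\<Prod>z\<in>F. fact (d z) :: real)"
  proof -
    have "real (fact r) \<le> real ((2 ^ n) ^ r * (\<Prod>z\<in>F. fact (d z)))" using mfn by (simp only: of_nat_le_iff)
    then show ?thesis by (simp add: of_nat_prod)
  qed
  have mi: "\<forall>p. m i p > 0" using mpj[OF i] .
  have each: "fact (d z) * m z (k z) \<le> L ^ d z * m i (d z) * m z (k z + d z)" if z: "z \<in> F" for z
  proof (cases "d z = 0")
    case True then show ?thesis using m0[OF i] by simp
  next
    case False
    then have "z \<in> set ys" unfolding d_def by (simp add: count_list_0_iff)
    then have zz: "z \<in> {1..n}" "c i z \<noteq> 0 \<or> c z i \<noteq> 0" using ys by auto
    have A3: "\<forall>p\<ge>1. real p * m i (p - 1) * m z (p - 1) \<le> L * m i p * m z p"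
      using LA3 i zz by blast
    show ?thesis
      by (rule W1[OF mi mpj[OF zz(1)] m0[OF i] m0[OF zz(1)] _ A3 mlc[OF zz(1)]]) (use L1 in simp)
  qed
  have p1: "(\<Prod>z\<in>F. fact (d z) * m z (k z)) \<le> (\<Prod>z\<in>F. L ^ d z * m i (d z) * m z (k z + d z))"
  proof (rule prod_mono)
    fix z assume z: "z \<in> F"
    then have "z \<in> {1..n}" unfolding F_def by auto
    then have "0 \<le> m z (k z)" using mpj less_imp_le by blast
    then show "0 \<le> fact (d z) * m z (k z) \<and> fact (d z) * m z (k z) \<le> L ^ d z * m i (d z) * m z (k z + d z)"
      using each[OF z] by simp
  qed
  have p2: "(\<Prod>z\<in>F. L ^ d z * m i (d z) * m z (k z + d z)) = L ^ r * (\<Prod>z\<in>F. m i (d z)) * (\<Prod>z\<in>F. m z (k z + d z))"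
    by (simp add: prod.distrib power_sum[symmetric] sumd)
  have p3: "m i (k i) * (\<Prod>z\<in>F. m i (d z)) \<le> m i (k i + r)"
    using prod_super[OF mi mlc[OF i] m0[OF i] finF, of "k i" d] sumd by simp
  have nnF: "0 \<le> (\<Prod>z\<in>F. m z (k z))" using mpos unfolding F_def by (intro prod_nonneg) (auto intro: less_imp_le)
  have nnF2: "0 \<le> (\<Prod>z\<in>F. m z (k z + d z))" using mpos unfolding F_def by (intro prod_nonneg) (auto intro: less_imp_le)
  have nni: "0 \<le> m i (k i)" using mi less_imp_le by blast
  have nnP: "0 \<le> (\<Prod>z\<in>F. m i (d z))" using mi by (intro prod_nonneg) (auto intro: less_imp_le)
  have "fact r * wt g' = fact r * (m i (k i) * (\<Prod>z\<in>F. m z (k z)))" using wg' by simp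
  also have "\<dots> \<le> ((2 ^ n) ^ r * (\<Prod>z\<in>F. fact (d z))) * (m i (k i) * (\<Prod>z\<in>F. m z (k z)))"
    using mf nnF nni by (intro mult_right_mono) auto
  also have "\<dots> = (2 ^ n) ^ r * m i (k i) * (\<Prod>z\<in>F. fact (d z) * m z (k z))"
    by (simp add: prod.distrib mult_ac)
  also have "\<dots> \<le> (2 ^ n) ^ r * m i (k i) * (L ^ r * (\<Prod>z\<in>F. m i (d z)) * (\<Prod>z\<in>F. m z (k z + d z)))"
    using p1 p2 nni by (intro mult_left_mono) auto
  also have "\<dots> = (2 ^ n) ^ r * L ^ r * (m i (k i) * (\<Prod>z\<in>F. m i (d z))) * (\<Prod>z\<in>F. m z (k z + d z))"
    by (simp add: mult_ac)
  also have "\<dots> \<le> (2 ^ n) ^ r * L ^ r * m i (k i + r) * (\<Prod>z\<in>F. m z (k z + d z))"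
    using p3 nnF2 L1 by (intro mult_right_mono mult_left_mono) auto
  also have "\<dots> = (2 ^ n * L) ^ r * wt g" using wg by (simp add: power_mult_distrib mult_ac)
  finally show ?thesis .
qed

lemma wt_double:
  assumes g: "set g \<subseteq> {1..n}" and cnt: "\<forall>z. count_list g2 z = 2 * count_list g z"
  shows "wt g2 \<le> H ^ (2 * length g) * (wt g)^2"
proof -
  have "wt g2 = (\<Prod>z\<in>{1..n}. m z (count_list g z + count_list g z))"
    unfolding wt_def using cnt by (intro prod.cong) (auto simp: mult_2)
  also have "\<dots> \<le> (\<Prod>z\<in>{1..n}. H ^ (2 * count_list g z) * (m z (count_list g z))^2)"
  proof (rule prod_mono)
    fix z assume z: "z \<in> {1..n}"
    have "m z (count_list g z + count_list g z) \<le> H ^ (count_list g z + count_list g z) * m z (count_list g z) * m z (count_list g z)"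
      using Hd z by blast
    moreover have "0 \<le> m z (count_list g z + count_list g z)" using mpj[OF z] less_imp_le by blast
    ultimately show "0 \<le> m z (count_list g z + count_list g z) \<and> m z (count_list g z + count_list g z) \<le> H ^ (2 * count_list g z) * (m z (count_list g z))\<^sup>2"
      by (simp add: power2_eq_square mult_2 mult.assoc)
  qed
  also have "\<dots> = H ^ (\<Sum>z\<in>{1..n}. 2 * count_list g z) * (\<Prod>z\<in>{1..n}. m z (count_list g z))^2"
    by (simp add: prod.distrib power_sum prod_power_distrib)
  also have "(\<Sum>z\<in>{1..n}. 2 * count_list g z) = 2 * length g"
    using sum_count_set[OF g] by (simp add: sum_distrib_left[symmetric])
  finally show ?thesis unfolding wt_def .
qed

lemma wt_rep:
  assumes i: "i \<in> {1..n}" and g: "count_list g i = 0"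
  shows "wt (g @ replicate s i) = wt g * m i s"
proof -
  have "wt (g @ replicate s i) = m i (count_list (g @ replicate s i) i) * (\<Prod>z\<in>{1..n} - {i}. m z (count_list (g @ replicate s i) z))"
    unfolding wt_def using i by (simp add: prod.remove)
  also have "(\<Prod>z\<in>{1..n} - {i}. m z (count_list (g @ replicate s i) z)) = (\<Prod>z\<in>{1..n} - {i}. m z (count_list g z))"
    by (intro prod.cong) (auto simp: count_list_replicate)
  also have "count_list (g @ replicate s i) i = s" using g by (simp add: count_list_replicate)
  also have "wt g = m i 0 * (\<Prod>z\<in>{1..n} - {i}. m z (count_list g z))"
    unfolding wt_def using i g by (simp add: prod.remove)
  ultimately show ?thesis using m0[OF i] by simp
qed

end


lemma filt_rep: "filter (\<lambda>x. x \<in> {i}) xs = replicate (count_list xs i) i"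
  by (induction xs) auto

lemma count_map_const: "(\<forall>x\<in>set xs. f x = a) \<Longrightarrow> count_list (map f xs) z = (if z = a then length xs else 0)"
  by (induction xs) auto

lemma len_le_counts:
  fixes h g :: "nat list"
  assumes "set h \<subseteq> {1..n}" "set g \<subseteq> {1..n}" "\<forall>z. count_list h z \<le> count_list g z"
  shows "length h \<le> length g"
proof -
  have "(\<Sum>z\<in>{1..n}. count_list h z) = length h" by (rule sum_count_set[OF assms(1)]) simp
  then have "length h = (\<Sum>z\<in>{1..n}. count_list h z)" by simp
  also have "\<dots> \<le> (\<Sum>z\<in>{1..n}. count_list g z)" using assms(3) by (intro sum_mono) auto
  also have "\<dots> = length g" by (rule sum_count_set[OF assms(2)]) simp
  finally show ?thesis .
qed

lemma set_counts: "\<forall>z. count_list h z \<le> count_list g z \<Longrightarrow> set h \<subseteq> set g"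
  by (metis count_list_0_iff le_zero_eq subsetI)

context mainloc
begin

definition cm :: real where "cm = (\<Sum>x\<in>{1..n}. \<Sum>y\<in>{1..n}. cmod (c x y))"

lemma cm_ge: "x \<in> {1..n} \<Longrightarrow> y \<in> {1..n} \<Longrightarrow> cmod (c x y) \<le> cm"
proof -
  assume x: "x \<in> {1..n}" and y: "y \<in> {1..n}"
  have "cmod (c x y) \<le> (\<Sum>y\<in>{1..n}. cmod (c x y))" using y by (intro member_le_sum) auto
  also have "\<dots> \<le> cm" unfolding cm_def using x by (intro member_le_sum sum_nonneg) auto
  finally show ?thesis .
qed

lemma cm_nonneg: "0 \<le> cm" unfolding cm_def by (intro sum_nonneg) auto

abbreviation Lw where "Lw \<equiv> 2 ^ n * L"
abbreviation Q where "Q \<equiv> 16 * max 1 (cm * Lw)"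

lemma Lw_nonneg: "0 \<le> Lw" using L1 by simp
lemma Q1: "1 \<le> Q" by simp

lemma step_a:
  assumes S': "S' \<subseteq> {1..n}" and i: "i \<in> {1..n}" "i \<notin> S'"
    and C': "C' > 0" "A' > 0" "\<forall>g. set g \<subseteq> S' \<longrightarrow> N (mapply X g u) \<le> C' * A' ^ length g * wt g"
    and Ci: "Ci > 0" "Ai > 0" "\<forall>s. N (mapply X (replicate s i) u) \<le> Ci * Ai ^ s * m i s"
    and beta: "set beta \<subseteq> S'"
  shows "N (mapply X (replicate p i @ beta) u)
     \<le> sqrt (C' * Ci) * (max 1 (max A' Ai) * H * Q) ^ (p + length beta) * wt (replicate p i @ beta)"
proof -
  define M where "M = max 1 (max A' Ai)"
  have M1: "1 \<le> M" unfolding M_def by simp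
  define b where "b = length beta"
  define w where "w = mapply X beta u"
  have sb: "set beta \<subseteq> {1..n}" using beta S' by auto
  have wD: "w \<in> D" unfolding w_def using mapply_D[OF sb uD] .
  have iset: "set (replicate k i) \<subseteq> {1..n}" for k using i by auto
  define a0 where "a0 = mapply X (replicate p i) w"
  have a0D: "a0 \<in> D" unfolding a0_def using mapply_D[OF iset wD] .
  define g where "g = replicate (p + p) i @ beta"
  have sg: "set g \<subseteq> {1..n}" unfolding g_def using sb i by auto
  have ibeta: "count_list beta i = 0" using beta i by (auto intro: count_notin)
  have fi: "filter (\<lambda>x. x \<in> {i}) g = replicate (p + p) i"
    unfolding filt_rep g_def using ibeta by (simp add: count_list_replicate)
  have fS: "filter (\<lambda>x. x \<in> S') g = beta"
    unfolding g_def using beta i by (auto simp: filter_id_conv)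
  define Del where "Del = g @ beta"
  define K0 where "K0 = C' * Ci * M ^ (2 * (p + b)) * wt Del"
  have K0: "0 \<le> K0" unfolding K0_def using C' Ci M1 wt_nonneg by simp
  define G where "G r = (if r \<le> p + p then K0 * Lw ^ r / fact r else 0)" for r
  have G0: "\<forall>r. 0 \<le> G r" unfolding G_def using K0 Lw_nonneg by simp
  define phi where "phi v = cmod (ip w v)" for v
  have phi: "\<And>a b t. phi (a + sc t b) \<le> phi a + cmod t * phi b" unfolding phi_def by (rule ipphi)
  have hyp: "\<forall>r g'. delrel {i} S' r g g' \<longrightarrow> ninv {i} S' g' = 0 \<longrightarrow> phi (mapply X g' u) \<le> G r"
  proof (intro allI impI)
    fix r g' assume dr: "delrel {i} S' r g g'" and nrm: "ninv {i} S' g' = 0"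
    obtain ps where ps: "length ps = r" "\<forall>q\<in>set ps. fst q \<in> {i} \<and> snd q \<in> S' \<and> c (fst q) (snd q) \<noteq> 0"
      "\<forall>z. count_list g z = count_list g' z + count_list (map fst ps) z + count_list (map snd ps) z"
      using dr unfolding delrel_def by blast
    define ys where "ys = map snd ps"
    have cfst: "count_list (map fst ps) z = (if z = i then r else 0)" for z
      using count_map_const[of ps fst i z] ps by auto
    have cnt: "\<forall>z. count_list g z = count_list g' z + (if z = i then r else 0) + count_list ys z"
      using ps(3) cfst unfolding ys_def by simp
    have ys: "length ys = r" "set ys \<subseteq> {j \<in> {1..n}. j \<noteq> i \<and> (c i j \<noteq> 0 \<or> c j i \<noteq> 0)}"
      unfolding ys_def using ps S' i by auto
    have cgi: "count_list g i = p + p" unfolding g_def using ibeta by (simp add: count_list_replicate)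
    have rp: "r \<le> p + p" using cnt[rule_format, of i] cgi by simp
    have cle: "\<forall>z. count_list g' z \<le> count_list g z" using cnt by simp
    have sg': "set g' \<subseteq> {i} \<union> S'" using set_counts[OF cle] unfolding g_def using beta by auto
    have sg'n: "set g' \<subseteq> {1..n}" using sg' S' i by auto
    have lg': "length g' \<le> length g" using len_le_counts[OF sg'n sg cle] .
    define beta' where "beta' = filter (\<lambda>x. x \<in> S') g'"
    define s where "s = count_list g' i"
    have g'eq: "g' = beta' @ replicate s i"
      using inv_normal[of g' "{i}" S'] sg' nrm i unfolding beta'_def s_def filt_rep by auto
    have sb': "set beta' \<subseteq> {1..n}" unfolding beta'_def using sg'n by auto
    have sbS: "set beta' \<subseteq> S'" unfolding beta'_def by auto
    have "phi (mapply X g' u) = cmod (ip w (mapply X beta' (mapply X (replicate s i) u)))"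
      unfolding phi_def g'eq by (simp add: mapply_append)
    also have "\<dots> = cmod (ip (mapply X (rev beta') w) (mapply X (replicate s i) u))"
      using adj2[OF sb' wD mapply_D[OF iset uD]] .
    also have "\<dots> \<le> N (mapply X (rev beta' @ beta) u) * N (mapply X (replicate s i) u)"
      unfolding w_def mapply_append by (rule CS)
    also have "\<dots> \<le> (C' * A' ^ length (rev beta' @ beta) * wt (rev beta' @ beta)) * (Ci * Ai ^ s * m i s)"
    proof (rule mult_mono)
      show "N (mapply X (rev beta' @ beta) u) \<le> C' * A' ^ length (rev beta' @ beta) * wt (rev beta' @ beta)"
      proof -
        have "set (rev beta' @ beta) \<subseteq> S'" using sbS beta by auto
        then show ?thesis using C'(3) by blast
      qed
      show "N (mapply X (replicate s i) u) \<le> Ci * Ai ^ s * m i s" using Ci(3) by blast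
      show "0 \<le> C' * A' ^ length (rev beta' @ beta) * wt (rev beta' @ beta)"
        using C' wt_nonneg by simp
      show "0 \<le> N (mapply X (replicate s i) u)" by (rule N_nonneg)
    qed
    also have "\<dots> = C' * Ci * (A' ^ length (rev beta' @ beta) * Ai ^ s) * (wt (rev beta' @ beta) * m i s)"
      by (simp add: mult_ac)
    also have "\<dots> \<le> C' * Ci * M ^ (2 * (p + b)) * (wt (rev beta' @ beta) * m i s)"
    proof -
      have "A' ^ length (rev beta' @ beta) * Ai ^ s \<le> M ^ length (rev beta' @ beta) * M ^ s"
        unfolding M_def using C' Ci by (intro mult_mono power_mono) auto
      also have "\<dots> = M ^ (length g' + b)" unfolding g'eq b_def by (simp add: power_add)
      also have "\<dots> \<le> M ^ (2 * (p + b))" using lg' M1 unfolding g_def b_def by (intro power_increasing) auto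
      finally have e: "A' ^ length (rev beta' @ beta) * Ai ^ s \<le> M ^ (2 * (p + b))" .
      have "0 \<le> wt (rev beta' @ beta) * m i s" using wt_nonneg mpj[OF i(1)] by (simp add: less_imp_le)
      then show ?thesis using e C' Ci by (intro mult_right_mono mult_left_mono) auto
    qed
    also have "wt (rev beta' @ beta) * m i s = wt (rev beta' @ beta @ replicate s i)"
    proof -
      have "count_list (rev beta' @ beta) i = 0" using sbS beta i by (auto intro: count_notin)
      then have "wt ((rev beta' @ beta) @ replicate s i) = wt (rev beta' @ beta) * m i s" by (rule wt_rep[OF i(1)])
      then show ?thesis by simp
    qed
    also have "wt (rev beta' @ beta @ replicate s i) \<le> Lw ^ r * wt Del / fact r"
    proof -
      have "fact r * wt (rev beta' @ beta @ replicate s i) \<le> Lw ^ r * wt Del"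
      proof (rule W[OF i(1) ys])
        show "\<forall>z. count_list Del z = count_list (rev beta' @ beta @ replicate s i) z + (if z = i then r else 0) + count_list ys z"
        proof
          fix z
          have "count_list g' z = count_list beta' z + count_list (replicate s i) z"
            by (subst g'eq) simp
          then show "count_list Del z = count_list (rev beta' @ beta @ replicate s i) z + (if z = i then r else 0) + count_list ys z"
            unfolding Del_def using cnt by simp
        qed
      qed
      then show ?thesis by (simp add: field_simps)
    qed
    finally have "phi (mapply X g' u) \<le> C' * Ci * M ^ (2 * (p + b)) * (Lw ^ r * wt Del / fact r)"
      using C' Ci M1 by (simp add: mult_left_mono)
    also have "\<dots> = G r" unfolding G_def K0_def using rp by simp
    finally show "phi (mapply X g' u) \<le> G r" .
  qed
  have invg: "ninv {i} S' g \<le> (p + p) * b"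
    using inv_bound[of "{i}" S' g] fi fS unfolding b_def by simp
  have sgu: "set g \<subseteq> {i} \<union> S'" unfolding g_def using beta by auto
  have sb1: "phi (mapply X g u) \<le> (\<Sum>r\<le>(p + p) * b. real (((p + p) * b) choose r) * cm ^ r * G r)"
  proof -
    have AB: "{i} \<inter> S' = {}" "{i} \<subseteq> {1..n}" "S' \<subseteq> {1..n}" using i S' by auto
    have cmc: "\<forall>x\<in>{i}. \<forall>y\<in>S'. cmod (c x y) \<le> cm" using cm_ge i S' by auto
    show ?thesis
      by (rule swap_bound[OF AB phi uD cmc cm_nonneg, THEN spec, THEN spec, THEN mp, THEN mp, THEN mp, THEN mp, OF sgu invg G0 hyp])
  qed
  also have "\<dots> \<le> K0 * Q ^ ((p + p) + b)"
    unfolding G_def by (rule sumbound[OF cm_nonneg Lw_nonneg K0])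
  finally have sq1: "phi (mapply X g u) \<le> K0 * Q ^ ((p + p) + b)" .
  have "(N a0)^2 = Re (ip a0 a0)" by (rule N_sq)
  also have "\<dots> \<le> cmod (ip a0 a0)" by (rule complex_Re_le_cmod)
  also have "cmod (ip a0 a0) = cmod (ip w (mapply X (rev (replicate p i)) a0))"
    unfolding a0_def using adj1[OF iset wD a0D[unfolded a0_def]] .
  also have "\<dots> = phi (mapply X g u)"
  proof -
    have "mapply X g u = mapply X (replicate p i) a0"
      unfolding g_def a0_def w_def replicate_add by (simp only: mapply_append append_assoc)
    then show ?thesis unfolding phi_def by simp
  qed
  also have "\<dots> \<le> K0 * Q ^ ((p + p) + b)" by (rule sq1)
  also have "\<dots> \<le> (C' * Ci * M ^ (2 * (p + b)) * (H ^ (2 * (p + b)) * (wt (replicate p i @ beta))^2)) * Q ^ (2 * (p + b))"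
  proof -
    have d: "wt Del \<le> H ^ (2 * length (replicate p i @ beta)) * (wt (replicate p i @ beta))^2"
    proof (rule wt_double)
      show "set (replicate p i @ beta) \<subseteq> {1..n}" using i sb by auto
      show "\<forall>z. count_list Del z = 2 * count_list (replicate p i @ beta) z"
        unfolding Del_def g_def by (simp add: count_list_replicate)
    qed
    have l: "length (replicate p i @ beta) = p + b" unfolding b_def by simp
    have q: "Q ^ ((p + p) + b) \<le> Q ^ (2 * (p + b))" using Q1 by (intro power_increasing) auto
    have d': "wt Del \<le> H ^ (2 * (p + b)) * (wt (replicate p i @ beta))^2" using d unfolding l .
    have nn: "0 \<le> C' * Ci * M ^ (2 * (p + b))" using C' Ci M1 by simp
    have k: "K0 \<le> C' * Ci * M ^ (2 * (p + b)) * (H ^ (2 * (p + b)) * (wt (replicate p i @ beta))^2)"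
      unfolding K0_def by (rule mult_left_mono[OF d' nn])
    have nn2: "0 \<le> C' * Ci * M ^ (2 * (p + b)) * (H ^ (2 * (p + b)) * (wt (replicate p i @ beta))^2)"
      using nn H1 by simp
    have nn3: "0 \<le> Q ^ ((p + p) + b)" using Q1 by simp
    show ?thesis by (rule mult_mono[OF k q nn2 nn3])
  qed
  also have "\<dots> = (sqrt (C' * Ci) * (M * H * Q) ^ (p + b) * wt (replicate p i @ beta))^2"
  proof -
    define W where "W = wt (replicate p i @ beta)"
    have s2: "(sqrt (C' * Ci))^2 = C' * Ci" using C' Ci by simp
    have e1: "(M * H * Q) ^ (2 * (p + b)) = M ^ (2 * (p + b)) * H ^ (2 * (p + b)) * Q ^ (2 * (p + b))"
      by (simp only: power_mult_distrib)
    have e0: "((M * H * Q) ^ (p + b))^2 = (M * H * Q) ^ (2 * (p + b))" by (rule power_even_eq[symmetric])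
    have "(sqrt (C' * Ci) * (M * H * Q) ^ (p + b) * W)^2 = (sqrt (C' * Ci))^2 * ((M * H * Q) ^ (p + b))^2 * W^2"
      by (simp only: power_mult_distrib)
    also have "\<dots> = C' * Ci * (M ^ (2 * (p + b)) * H ^ (2 * (p + b)) * Q ^ (2 * (p + b))) * W^2"
      by (simp only: s2 e0 e1)
    also have "\<dots> = (C' * Ci * M ^ (2 * (p + b)) * (H ^ (2 * (p + b)) * W^2)) * Q ^ (2 * (p + b))"
      by (simp only: mult_ac)
    finally show ?thesis unfolding W_def by simp
  qed
  finally have "(N a0)^2 \<le> (sqrt (C' * Ci) * (M * H * Q) ^ (p + b) * wt (replicate p i @ beta))^2" .
  moreover have "0 \<le> sqrt (C' * Ci) * (M * H * Q) ^ (p + b) * wt (replicate p i @ beta)"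
    using C' Ci M1 H1 wt_nonneg[of "replicate p i @ beta"] by simp
  ultimately have "N a0 \<le> sqrt (C' * Ci) * (M * H * Q) ^ (p + b) * wt (replicate p i @ beta)"
    by (rule power2_le_imp_le)
  moreover have "a0 = mapply X (replicate p i @ beta) u" unfolding a0_def w_def by (simp add: mapply_append)
  ultimately show ?thesis unfolding M_def b_def by simp
qed

end


context mainloc
begin

lemma step_b:
  assumes S': "S' \<subseteq> {1..n}" and i: "i \<in> {1..n}" "i \<notin> S'"
    and C': "C' > 0" "A' > 0" "\<forall>g. set g \<subseteq> S' \<longrightarrow> N (mapply X g u) \<le> C' * A' ^ length g * wt g"
    and Ci: "Ci > 0" "Ai > 0" "\<forall>s. N (mapply X (replicate s i) u) \<le> Ci * Ai ^ s * m i s"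
    and g: "set g \<subseteq> insert i S'"
  shows "N (mapply X g u) \<le> sqrt (C' * Ci) * (max 1 (max A' Ai) * H * Q * Q) ^ length g * wt g"
proof -
  define E where "E = max 1 (max A' Ai) * H * Q"
  have E1: "1 \<le> E"
  proof -
    have a: "1 \<le> max 1 (max A' Ai)" by simp
    have "1 * 1 \<le> max 1 (max A' Ai) * H" using a H1 by (intro mult_mono) auto
    then have b: "1 \<le> max 1 (max A' Ai) * H" by simp
    have "1 * 1 \<le> max 1 (max A' Ai) * H * Q" using b Q1 by (intro mult_mono) auto
    then show ?thesis unfolding E_def by simp
  qed
  define P where "P = count_list g i"
  define b where "b = length (filter (\<lambda>x. x \<in> S') g)"
  have sgn: "set g \<subseteq> {1..n}" using g S' i by auto
  have fi: "filter (\<lambda>x. x \<in> {i}) g = replicate P i" unfolding P_def by (rule filt_rep)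
  have lenPb: "length g = P + b"
  proof -
    have "filter (\<lambda>x. \<not> x \<in> {i}) g = filter (\<lambda>x. x \<in> S') g"
      using g i by (intro filter_cong) auto
    then show ?thesis using sum_length_filter_compl[of "\<lambda>x. x \<in> {i}" g] fi unfolding b_def by simp
  qed
  define K1 where "K1 = sqrt (C' * Ci) * E ^ length g * wt g"
  have K1: "0 \<le> K1" unfolding K1_def using C' Ci E1 wt_nonneg[of g] by simp
  define G where "G r = (if r \<le> P then K1 * Lw ^ r / fact r else 0)" for r
  have G0: "\<forall>r. 0 \<le> G r" unfolding G_def using K1 Lw_nonneg by simp
  have hyp: "\<forall>r g'. delrel S' {i} r g g' \<longrightarrow> ninv S' {i} g' = 0 \<longrightarrow> N (mapply X g' u) \<le> G r"
  proof (intro allI impI)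
    fix r g' assume dr: "delrel S' {i} r g g'" and nrm: "ninv S' {i} g' = 0"
    obtain ps where ps: "length ps = r" "\<forall>q\<in>set ps. fst q \<in> S' \<and> snd q \<in> {i} \<and> c (fst q) (snd q) \<noteq> 0"
      "\<forall>z. count_list g z = count_list g' z + count_list (map fst ps) z + count_list (map snd ps) z"
      using dr unfolding delrel_def by blast
    define ys where "ys = map fst ps"
    have csnd: "count_list (map snd ps) z = (if z = i then r else 0)" for z
      using count_map_const[of ps snd i z] ps by auto
    have cnt: "\<forall>z. count_list g z = count_list g' z + (if z = i then r else 0) + count_list ys z"
      using ps(3) csnd unfolding ys_def by simp
    have ys: "length ys = r" "set ys \<subseteq> {j \<in> {1..n}. j \<noteq> i \<and> (c i j \<noteq> 0 \<or> c j i \<noteq> 0)}"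
      unfolding ys_def using ps S' i by auto
    have rP: "r \<le> P" using cnt[rule_format, of i] unfolding P_def by simp
    have cle: "\<forall>z. count_list g' z \<le> count_list g z" using cnt by simp
    have sg': "set g' \<subseteq> S' \<union> {i}" using set_counts[OF cle] g by auto
    have sg'n: "set g' \<subseteq> {1..n}" using sg' S' i by auto
    have lg': "length g' \<le> length g" using len_le_counts[OF sg'n sgn cle] .
    define beta' where "beta' = filter (\<lambda>x. x \<in> S') g'"
    define s where "s = count_list g' i"
    have g'eq: "g' = replicate s i @ beta'"
      using inv_normal[of g' S' "{i}"] sg' nrm i unfolding beta'_def s_def filt_rep by auto
    have sbS: "set beta' \<subseteq> S'" unfolding beta'_def by auto
    have "N (mapply X g' u) \<le> sqrt (C' * Ci) * E ^ (s + length beta') * wt (replicate s i @ beta')"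
      unfolding g'eq E_def by (rule step_a[OF S' i C' Ci sbS])
    also have "\<dots> \<le> sqrt (C' * Ci) * E ^ length g * wt g'"
    proof -
      have "s + length beta' = length g'" unfolding g'eq by simp
      then have "E ^ (s + length beta') \<le> E ^ length g" using lg' E1 by (simp add: power_increasing)
      then show ?thesis using C' Ci wt_nonneg[of g'] g'eq
        by (simp add: mult_right_mono mult_left_mono)
    qed
    also have "\<dots> \<le> sqrt (C' * Ci) * E ^ length g * (Lw ^ r * wt g / fact r)"
    proof -
      have "fact r * wt g' \<le> Lw ^ r * wt g" by (rule W[OF i(1) ys cnt])
      then have "wt g' \<le> Lw ^ r * wt g / fact r" by (simp add: field_simps)
      moreover have "0 \<le> sqrt (C' * Ci) * E ^ length g" using C' Ci E1 by simp
      ultimately show ?thesis by (rule mult_left_mono)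
    qed
    also have "\<dots> = G r" unfolding G_def K1_def using rP by simp
    finally show "N (mapply X g' u) \<le> G r" .
  qed
  have invg: "ninv S' {i} g \<le> P * b"
    using inv_bound[of S' "{i}" g] fi unfolding b_def by (simp add: mult.commute)
  have sgu: "set g \<subseteq> S' \<union> {i}" using g by auto
  have AB: "S' \<inter> {i} = {}" "S' \<subseteq> {1..n}" "{i} \<subseteq> {1..n}" using i S' by auto
  have cmc: "\<forall>x\<in>S'. \<forall>y\<in>{i}. cmod (c x y) \<le> cm" using cm_ge i S' by auto
  have "N (mapply X g u) \<le> (\<Sum>r\<le>P * b. real ((P * b) choose r) * cm ^ r * G r)"
    by (rule swap_bound[OF AB N_add_scale uD cmc cm_nonneg, THEN spec, THEN spec, THEN mp, THEN mp, THEN mp, THEN mp, OF sgu invg G0 hyp])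
  also have "\<dots> \<le> K1 * Q ^ (P + b)"
    unfolding G_def by (rule sumbound[OF cm_nonneg Lw_nonneg K1])
  also have "\<dots> = sqrt (C' * Ci) * (E * Q) ^ length g * wt g"
    unfolding K1_def lenPb by (simp add: power_mult_distrib mult_ac)
  finally show ?thesis unfolding E_def .
qed

lemma wt_nil: "wt [] = 1"
  unfolding wt_def using m0 by simp

lemma cl_all:
  assumes single: "\<forall>j\<in>{1..n}. \<exists>C>0. \<exists>A>0. \<forall>s. N (mapply X (replicate s j) u) \<le> C * A ^ s * m j s"
    and S: "S \<subseteq> {1..n}"
  shows "\<exists>C>0. \<exists>A>0. \<forall>g. set g \<subseteq> S \<longrightarrow> N (mapply X g u) \<le> C * A ^ length g * wt g"
proof -
  have fin: "finite S" using S finite_subset by blast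
  show ?thesis using fin S
  proof (induction S rule: finite_induct)
    case empty
    have "N (mapply X g u) \<le> (N u + 1) * 1 ^ length g * wt g" if "set g \<subseteq> {}" for g
      using that wt_nil by simp
    moreover have "N u + 1 > 0" using N_nonneg[of u] by simp
    ultimately show ?case by (metis zero_less_one)
  next
    case (insert i S')
    then have S': "S' \<subseteq> {1..n}" and i: "i \<in> {1..n}" "i \<notin> S'" by auto
    obtain C' A' where C': "C' > 0" "A' > 0" "\<forall>g. set g \<subseteq> S' \<longrightarrow> N (mapply X g u) \<le> C' * A' ^ length g * wt g"
      using insert.IH S' by blast
    obtain Ci Ai where Ci: "Ci > 0" "Ai > 0" "\<forall>s. N (mapply X (replicate s i) u) \<le> Ci * Ai ^ s * m i s"
      using single i by blast
    have "\<forall>g. set g \<subseteq> insert i S' \<longrightarrow> N (mapply X g u) \<le> sqrt (C' * Ci) * (max 1 (max A' Ai) * H * Q * Q) ^ length g * wt g"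
      using step_b[OF S' i C' Ci] by blast
    moreover have "sqrt (C' * Ci) > 0" using C' Ci by simp
    moreover have "max 1 (max A' Ai) * H * Q * Q > 0" using H1 Q1
      by (metis less_le_trans max.cobounded1 mult_pos_pos zero_less_one)
    ultimately show ?case by blast
  qed
qed

end



lemma uniform_bound:
  fixes P :: "'a \<Rightarrow> real \<Rightarrow> bool"
  assumes "finite I" "\<forall>x\<in>I. \<exists>L\<ge>1. P x L" "\<forall>x\<in>I. \<forall>L L'. P x L \<longrightarrow> L \<le> L' \<longrightarrow> P x L'"
  shows "\<exists>L\<ge>1. \<forall>x\<in>I. P x L"
  using assms
proof (induction I rule: finite_induct)
  case empty then show ?case by (intro exI[of _ 1]) simp
next
  case (insert a F)
  obtain L1 where L1: "L1 \<ge> 1" "P a L1" using insert.prems by blast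
  obtain L2 where L2: "L2 \<ge> 1" "\<forall>x\<in>F. P x L2" using insert.IH insert.prems by blast
  have "P a (max L1 L2)" using insert.prems(2) L1 by auto
  moreover have "\<forall>x\<in>F. P x (max L1 L2)" using insert.prems(2) L2 by auto
  ultimately show ?case using L1 by (intro exI[of _ "max L1 L2"]) auto
qed

lemma mapply_rep: "mapply X (replicate k j) v = (X j ^^ k) v"
  by (induction k) auto

context ops
begin

lemma in_mdom: "set a \<subseteq> {1..n} \<Longrightarrow> v \<in> D \<Longrightarrow> v \<in> mdom Dm X a"
proof (induction a)
  case Nil then show ?case by simp
next
  case (Cons z a)
  then have "mapply X a v \<in> D" using mapply_D by auto
  then have "mapply X a v \<in> Dm z" using Cons DDm by auto
  then show ?case using Cons by simp
qed

lemma in_powdom: "j \<in> {1..n} \<Longrightarrow> v \<in> D \<Longrightarrow> v \<in> powdom (Dm j) (X j) k"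
proof (induction k)
  case 0 then show ?case by simp
next
  case (Suc k)
  have "set (replicate k j) \<subseteq> {1..n}" using Suc by auto
  then have "mapply X (replicate k j) v \<in> D" using mapply_D Suc by blast
  then have "(X j ^^ k) v \<in> Dm j" using DDm Suc by (simp add: mapply_rep)
  then show ?case using Suc by simp
qed

end

theorem theorem2p6:
  fixes sc :: "complex \<Rightarrow> 'h::ab_group_add \<Rightarrow> 'h"
    and ip :: "'h \<Rightarrow> 'h \<Rightarrow> complex"
    and n :: nat
    and Dm :: "nat \<Rightarrow> 'h set" and X :: "nat \<Rightarrow> 'h \<Rightarrow> 'h"
    and D :: "'h set"
    and c :: "nat \<Rightarrow> nat \<Rightarrow> complex"
    and m :: "nat \<Rightarrow> nat \<Rightarrow> real"
    and u :: 'h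
  assumes H: "complex_hilbert_space sc ip"
    and n: "n \<ge> 1"
    and ops: "\<forall>j\<in>{1..n}. is_operator sc (Dm j) (X j)"
    and herm: "\<forall>j\<in>{1..n}. hermitian_op ip (Dm j) (X j) \<or> skew_hermitian_op ip (Dm j) (X j)"
    and D_dom: "\<forall>j\<in>{1..n}. D \<subseteq> Dm j \<and> X j ` D \<subseteq> D"
    and comm: "\<forall>i\<in>{1..n}. \<forall>j\<in>{1..n}. \<forall>v\<in>D. X i (X j v) - X j (X i v) = sc (c i j) v"
    and mpos: "\<forall>j\<in>{1..n}. \<forall>p. m j p > 0"
    and A0: "condA0 n m" and A1: "condA1 n m" and A2: "condA2 n m"
    and A3: "\<forall>i\<in>{1..n}. \<forall>j\<in>{1..n}. c i j \<noteq> 0 \<longrightarrow> condA3 (m i) (m j)"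
    and uD: "u \<in> D"
  shows "u \<in> GSR ip n Dm X m \<longleftrightarrow> (\<forall>j\<in>{1..n}. u \<in> GSR1 ip (Dm j) (X j) (m j))"
proof -
  obtain H0 where H0: "H0 > 0" "\<forall>j\<in>{1..n}. \<forall>p q. m j (p + q) \<le> H0 ^ (p + q) * m j p * m j q"
    using A2 unfolding condA2_def by blast
  define HH where "HH = max 1 H0"
  have HH1: "HH \<ge> 1" unfolding HH_def by simp
  have Hd: "\<forall>j\<in>{1..n}. \<forall>p. m j (p + p) \<le> HH ^ (p + p) * m j p * m j p"
  proof (intro ballI allI)
    fix j p assume j: "j \<in> {1..n}"
    have "m j (p + p) \<le> H0 ^ (p + p) * m j p * m j p" using H0 j by blast
    also have "\<dots> = H0 ^ (p + p) * (m j p * m j p)" by (simp add: mult.assoc)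
    also have "\<dots> \<le> HH ^ (p + p) * (m j p * m j p)"
      using H0 mpos j unfolding HH_def by (intro mult_right_mono power_mono) (auto intro: less_imp_le)
    finally show "m j (p + p) \<le> HH ^ (p + p) * m j p * m j p" by (simp add: mult.assoc)
  qed
  define PL where "PL x L \<longleftrightarrow> ((c (fst x) (snd x) \<noteq> 0 \<or> c (snd x) (fst x) \<noteq> 0) \<longrightarrow>
      (\<forall>p\<ge>1. real p * m (fst x) (p - 1) * m (snd x) (p - 1) \<le> L * m (fst x) p * m (snd x) p))" for x L
  have ex: "\<forall>x\<in>{1..n} \<times> {1..n}. \<exists>L\<ge>1. PL x L"
  proof
    fix x assume x: "x \<in> {1..n} \<times> {1..n}"
    obtain i j where ij: "x = (i, j)" "i \<in> {1..n}" "j \<in> {1..n}" using x by auto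
    show "\<exists>L\<ge>1. PL x L"
    proof (cases "c i j \<noteq> 0")
      case True
      then have "condA3 (m i) (m j)" using A3 ij by blast
      then show ?thesis unfolding condA3_def PL_def ij by auto
    next
      case False
      show ?thesis
      proof (cases "c j i \<noteq> 0")
        case True
        then have "condA3 (m j) (m i)" using A3 ij by blast
        then obtain L where "L \<ge> 1" "\<forall>p\<ge>1. real p * m j (p - 1) * m i (p - 1) \<le> L * m j p * m i p"
          unfolding condA3_def by blast
        then show ?thesis unfolding PL_def ij by (intro exI[of _ L]) (auto simp: mult_ac)
      next
        case False
        then show ?thesis using \<open>\<not> c i j \<noteq> 0\<close> unfolding PL_def ij by auto
      qed
    qed
  qed
  have mono: "\<forall>x\<in>{1..n} \<times> {1..n}. \<forall>L L'. PL x L \<longrightarrow> L \<le> L' \<longrightarrow> PL x L'"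
  proof (intro ballI allI impI)
    fix x L L' assume x: "x \<in> {1..n} \<times> {1..n}" and P: "PL x L" and LL: "L \<le> L'"
    have nn: "0 \<le> m (fst x) p * m (snd x) p" for p using mpos x by (auto intro: mult_nonneg_nonneg less_imp_le)
    have "L * m (fst x) p * m (snd x) p \<le> L' * m (fst x) p * m (snd x) p" for p
      using mult_right_mono[OF LL nn[of p]] by (simp add: mult.assoc)
    then show "PL x L'" using P unfolding PL_def by (meson order_trans)
  qed
  obtain L where L: "L \<ge> 1" "\<forall>x\<in>{1..n} \<times> {1..n}. PL x L"
    using uniform_bound[OF _ ex mono] by auto
  have LA3: "\<forall>i\<in>{1..n}. \<forall>j\<in>{1..n}. (c i j \<noteq> 0 \<or> c j i \<noteq> 0) \<longrightarrow>
      (\<forall>p\<ge>1. real p * m i (p - 1) * m j (p - 1) \<le> L * m i p * m j p)"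
    using L(2) unfolding PL_def by fastforce
  interpret M: mainloc sc ip n Dm X D c m u L HH
    by unfold_locales (fact H ops herm D_dom comm mpos A0 A1 HH1 Hd L(1) LA3 uD)+
  have mw: "mweight m n a = M.wt a" for a unfolding mweight_def M.wt_def by simp
  have wrep: "M.wt (replicate k j) = m j k" if "j \<in> {1..n}" for j k
    using M.wt_rep[OF that, of "[]" k] M.wt_nil by simp
  show ?thesis
  proof
    assume "u \<in> GSR ip n Dm X m"
    then obtain A C where AC: "A > 0" "C > 0"
      "\<forall>a\<in>multiindices n. hnorm ip (mapply X a u) \<le> C * A ^ length a * mweight m n a"
      unfolding GSR_def by blast
    show "\<forall>j\<in>{1..n}. u \<in> GSR1 ip (Dm j) (X j) (m j)"
    proof
      fix j assume j: "j \<in> {1..n}"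
      have "\<forall>k\<ge>1. hnorm ip ((X j ^^ k) u) \<le> C * A ^ k * m j k"
      proof (intro allI impI)
        fix k :: nat assume k: "k \<ge> 1"
        have "replicate k j \<in> multiindices n" unfolding multiindices_def using k j by auto
        then have "hnorm ip (mapply X (replicate k j) u) \<le> C * A ^ length (replicate k j) * mweight m n (replicate k j)"
          using AC by blast
        then show "hnorm ip ((X j ^^ k) u) \<le> C * A ^ k * m j k"
          using wrep[OF j] by (simp add: mapply_rep mw)
      qed
      then show "u \<in> GSR1 ip (Dm j) (X j) (m j)"
        unfolding GSR1_def using M.in_powdom[OF j uD] AC by blast
    qed
  next
    assume G1: "\<forall>j\<in>{1..n}. u \<in> GSR1 ip (Dm j) (X j) (m j)"
    have single: "\<forall>j\<in>{1..n}. \<exists>C>0. \<exists>A>0. \<forall>s. hnorm ip (mapply X (replicate s j) u) \<le> C * A ^ s * m j s"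
    proof
      fix j assume j: "j \<in> {1..n}"
      obtain A C where AC: "A > 0" "C > 0" "\<forall>k\<ge>1. hnorm ip ((X j ^^ k) u) \<le> C * A ^ k * m j k"
        using G1 j unfolding GSR1_def by blast
      define C2 where "C2 = max C (hnorm ip u + 1)"
      have C2: "C2 > 0" unfolding C2_def using AC by simp
      have "hnorm ip (mapply X (replicate s j) u) \<le> C2 * A ^ s * m j s" for s
      proof (cases "s = 0")
        case True
        then show ?thesis using M.m0[OF j] unfolding C2_def by simp
      next
        case False
        then have "hnorm ip ((X j ^^ s) u) \<le> C * A ^ s * m j s" using AC by simp
        also have "\<dots> \<le> C2 * A ^ s * m j s"
          unfolding C2_def using AC mpos j by (intro mult_right_mono) (auto intro: less_imp_le)
        finally show ?thesis by (simp add: mapply_rep)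
      qed
      then show "\<exists>C>0. \<exists>A>0. \<forall>s. hnorm ip (mapply X (replicate s j) u) \<le> C * A ^ s * m j s"
        using C2 AC by blast
    qed
    obtain C A where CA: "C > 0" "A > 0" "\<forall>g. set g \<subseteq> {1..n} \<longrightarrow> hnorm ip (mapply X g u) \<le> C * A ^ length g * M.wt g"
      using M.cl_all[OF single] by blast
    have cinf: "u \<in> Cinf n Dm X" unfolding Cinf_def multiindices_def using M.in_mdom uD by blast
    have "\<forall>a\<in>multiindices n. hnorm ip (mapply X a u) \<le> C * A ^ length a * mweight m n a"
      unfolding multiindices_def mw using CA by blast
    then show "u \<in> GSR ip n Dm X m" unfolding GSR_def using cinf CA by blast
  qed
qed


end
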